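(* Let $(B_i)_{i\in Q_0}\in\bigoplus_i\mathrm{Herm}(V_i)$ and let $a_{i,1}\leq\ldots\leq a_{i,d_i}$ be the eigenvalues of $B_i$. Set $\Theta_{i,k}=a_{i,k}-a_{i,k+1}$ for $i\in Q_0$, $1\le k<d_i$, and $\Theta_{i,d_i}=a_{i,d_i}$. Then $(B_i)_i$ belongs to the image of $\mu_Q$ if and only if the tuple of scalar operators $(\Theta_{i,k}\cdot\mathrm{id}_{V_{i,k}})_{i,k}$ belongs to the image of $\mu_{Q_{\mathbf d}}:R_{\hat{\mathbf d}}(Q_{\mathbf d})\to\bigoplus_{i,k}\mathrm{Herm}(V_{i,k})$.
   Context: $Q$ is a finite quiver with vertex set $Q_0$ and arrows $\alpha:i\to j$; $\mathbf d\in\mathbb NQ_0$. For any quiver $\Gamma$ and complex vector spaces $W_v$ ($v\in\Gamma_0$) with Hermitian inner products, $R(\Gamma)=\bigoplus_{\alpha:v\to w}\mathrm{Hom}(W_v,W_w)$ and $\mu_\Gamma((f_\alpha))_v=\sum_{\alpha:w\to v}f_\alpha f_\alpha^*-\sum_{\alpha:v\to w}f_\alpha^*f_\alpha\in\mathrm{Herm}(W_v)$. For $Q$ we use spaces $V_i$ of dimension $d_i$, giving $\mu_Q$ on $R_{\mathbf d}(Q)$. The leg-extended quiver $Q_{\mathbf d}$ has vertices $(i,k)$ for $i\in Q_0$, $1\leq k\leq d_i$, an arrow $\alpha:(i,d_i)\to(j,d_j)$ for each arrow $\alpha:i\to j$ of $Q$ (with $d_i,d_j\geq1$), and arrows $\beta_{i,k}:(i,k)\to(i,k+1)$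 for $i\in Q_0$, $1\le k<d_i$. Its dimension vector $\hat{\mathbf d}$ is $\hat d_{i,k}=k$. For $Q_{\mathbf d}$ we use Hermitian spaces $V_{i,k}$ of dimension $k$, with $V_{i,d_i}=V_i$ (same Hermitian form), giving $\mu_{Q_{\mathbf d}}$ on $R_{\hat{\mathbf d}}(Q_{\mathbf d})$. *)

theory Defs
  imports Complex_Main "Jordan_Normal_Form.Char_Poly"
begin

text \<open>Hermitian spaces of dimension n are modelled as C^n with the standard
  Hermitian inner product; linear maps are complex matrices, and the adjoint
  of a map is the conjugate transpose.\<close>

definition cadj :: "complex mat \<Rightarrow> complex mat" where
  "cadj A = mat (dim_col A) (dim_row A) (\<lambda>(p,q). cnj (A $$ (q,p)))"

definition herm :: "nat \<Rightarrow> complex mat \<Rightarrow> bool" where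
  "herm n B \<longleftrightarrow> B \<in> carrier_mat n n \<and> cadj B = B"

text \<open>A quiver: vertex set V, arrow set E, source s, target t; dimension vector nd.
  R(Gamma) = representations: an n_t x n_s matrix for each arrow.\<close>

definition rep_space ::
  "'e set \<Rightarrow> ('e \<Rightarrow> 'v) \<Rightarrow> ('e \<Rightarrow> 'v) \<Rightarrow> ('v \<Rightarrow> nat) \<Rightarrow> ('e \<Rightarrow> complex mat) set" where
  "rep_space E s t nd = {f. \<forall>\<alpha>\<in>E. f \<alpha> \<in> carrier_mat (nd (t \<alpha>)) (nd (s \<alpha>))}"

definition moment ::
  "'e set \<Rightarrow> ('e \<Rightarrow> 'v) \<Rightarrow> ('e \<Rightarrow> 'v) \<Rightarrow> ('v \<Rightarrow> nat) \<Rightarrow> ('e \<Rightarrow> complex mat) \<Rightarrow> 'v \<Rightarrow> complex mat" where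
  "moment E s t nd f v = mat (nd v) (nd v) (\<lambda>pq.
      (\<Sum>\<alpha>\<in>{\<alpha>\<in>E. t \<alpha> = v}. (f \<alpha> * cadj (f \<alpha>)) $$ pq)
    - (\<Sum>\<alpha>\<in>{\<alpha>\<in>E. s \<alpha> = v}. (cadj (f \<alpha>) * f \<alpha>) $$ pq))"

definition in_moment_image ::
  "'v set \<Rightarrow> 'e set \<Rightarrow> ('e \<Rightarrow> 'v) \<Rightarrow> ('e \<Rightarrow> 'v) \<Rightarrow> ('v \<Rightarrow> nat) \<Rightarrow> ('v \<Rightarrow> complex mat) \<Rightarrow> bool" where
  "in_moment_image V E s t nd B \<longleftrightarrow>
     (\<exists>f\<in>rep_space E s t nd. \<forall>v\<in>V. moment E s t nd f v = B v)"

text \<open>Leg-extended quiver Q_d: vertices (i,k), 1 \<le> k \<le> d i; arrows are the original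
  arrows (between (i,d_i) and (j,d_j), when d_i, d_j \<ge> 1) and legs beta_{i,k}:(i,k)\<rightarrow>(i,k+1).\<close>

datatype ('v,'e) leg_arrow = Orig 'e | Leg 'v nat

definition leg_vertices :: "'v set \<Rightarrow> ('v \<Rightarrow> nat) \<Rightarrow> ('v \<times> nat) set" where
  "leg_vertices V d = {(i,k). i \<in> V \<and> 1 \<le> k \<and> k \<le> d i}"

definition leg_arrows ::
  "'v set \<Rightarrow> 'e set \<Rightarrow> ('e \<Rightarrow> 'v) \<Rightarrow> ('e \<Rightarrow> 'v) \<Rightarrow> ('v \<Rightarrow> nat) \<Rightarrow> ('v,'e) leg_arrow set" where
  "leg_arrows V E s t d =
     {Orig \<alpha> | \<alpha>. \<alpha> \<in> E \<and> 1 \<le> d (s \<alpha>) \<and> 1 \<le> d (t \<alpha>)}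
   \<union> {Leg i k | i k. i \<in> V \<and> 1 \<le> k \<and> k < d i}"

fun leg_src :: "('e \<Rightarrow> 'v) \<Rightarrow> ('v \<Rightarrow> nat) \<Rightarrow> ('v,'e) leg_arrow \<Rightarrow> 'v \<times> nat" where
  "leg_src s d (Orig \<alpha>) = (s \<alpha>, d (s \<alpha>))"
| "leg_src s d (Leg i k) = (i, k)"

fun leg_tgt :: "('e \<Rightarrow> 'v) \<Rightarrow> ('v \<Rightarrow> nat) \<Rightarrow> ('v,'e) leg_arrow \<Rightarrow> 'v \<times> nat" where
  "leg_tgt t d (Orig \<alpha>) = (t \<alpha>, d (t \<alpha>))"
| "leg_tgt t d (Leg i k) = (i, Suc k)"

definition leg_dim :: "'v \<times> nat \<Rightarrow> nat" where
  "leg_dim ik = snd ik"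

definition sorted_eigenvalues :: "complex mat \<Rightarrow> real list \<Rightarrow> bool" where
  "sorted_eigenvalues B a \<longleftrightarrow> sorted a \<and> length a = dim_row B \<and>
     char_poly B = (\<Prod>x\<leftarrow>a. [:- complex_of_real x, 1:])"

text \<open>Theta_{i,k} (k 1-based, list a 0-based).\<close>

definition Theta :: "real list \<Rightarrow> nat \<Rightarrow> nat \<Rightarrow> real" where
  "Theta a n k = (if k < n then a ! (k - 1) - a ! k else a ! (n - 1))"

end

theory Submission
  imports Defs "Jordan_Normal_Form.Schur_Decomposition"
begin

lemma cadj_carrier[simp]: "dim_row (cadj A) = dim_col A" "dim_col (cadj A) = dim_row A"
  unfolding cadj_def by simp_all

lemma cadj_carrier_mat[simp]: "A \<in> carrier_mat m n \<Longrightarrow> cadj A \<in> carrier_mat n m"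
  unfolding carrier_mat_def by simp

lemma index_cadj[simp]: "i < dim_col A \<Longrightarrow> j < dim_row A \<Longrightarrow> cadj A $$ (i,j) = cnj (A $$ (j,i))"
  unfolding cadj_def by simp

lemma cadj_cadj[simp]: "cadj (cadj A) = A"
  by (rule eq_matI) simp_all
lemma cadj_mult: assumes "A \<in> carrier_mat m n" "B \<in> carrier_mat n p"
  shows "cadj (A * B) = cadj B * cadj A"
proof (rule eq_matI)
  fix i j assume ij: "i < dim_row (cadj B * cadj A)" "j < dim_col (cadj B * cadj A)"
  then have i: "i < p" and j: "j < m" using assms by auto
  have "cadj (A * B) $$ (i,j) = cnj (\<Sum>k<n. A $$ (j,k) * B $$ (k,i))"
    using assms i j by (simp add: scalar_prod_def lessThan_atLeast0)
  also have "\<dots> = (\<Sum>k<n. cnj (B $$ (k,i)) * cnj (A $$ (j,k)))"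
    by (simp add: mult.commute)
  also have "\<dots> = (cadj B * cadj A) $$ (i,j)"
    using assms i j by (simp add: scalar_prod_def lessThan_atLeast0)
  finally show "cadj (A * B) $$ (i,j) = (cadj B * cadj A) $$ (i,j)" .
qed (use assms in auto)

lemma cadj_one[simp]: "cadj (1\<^sub>m n) = 1\<^sub>m n"
  by (rule eq_matI) simp_all

lemma cadj_zero[simp]: "cadj (0\<^sub>m m n) = 0\<^sub>m n m"
  by (rule eq_matI) simp_all

lemma cadj_smult: "cadj (c \<cdot>\<^sub>m A) = cnj c \<cdot>\<^sub>m cadj A"
  by (rule eq_matI) simp_all

lemma cadj_add: assumes "A \<in> carrier_mat m n" "B \<in> carrier_mat m n"
  shows "cadj (A + B) = cadj A + cadj B"
  using assms by (intro eq_matI) simp_all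

lemma cadj_minus: assumes "A \<in> carrier_mat m n" "B \<in> carrier_mat m n"
  shows "cadj (A - B) = cadj A - cadj B"
  using assms by (intro eq_matI) simp_all

lemma cadj_four_block: assumes "A \<in> carrier_mat m1 n1" "B \<in> carrier_mat m1 n2"
  "C \<in> carrier_mat m2 n1" "D \<in> carrier_mat m2 n2"
  shows "cadj (four_block_mat A B C D) = four_block_mat (cadj A) (cadj C) (cadj B) (cadj D)"
  using assms by (intro eq_matI) simp_all

definition unitary :: "nat \<Rightarrow> complex mat \<Rightarrow> bool" where
  "unitary n U \<longleftrightarrow> U \<in> carrier_mat n n \<and> cadj U * U = 1\<^sub>m n"

lemma unitaryD: assumes "unitary n U"
  shows "U \<in> carrier_mat n n" "cadj U * U = 1\<^sub>m n" "U * cadj U = 1\<^sub>m n"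
proof -
  show U: "U \<in> carrier_mat n n" "cadj U * U = 1\<^sub>m n" using assms unfolding unitary_def by simp_all
  have cU: "cadj U \<in> carrier_mat n n" using U(1) by simp
  show "U * cadj U = 1\<^sub>m n"
    by (rule mat_mult_left_right_inverse[OF cU U(1) U(2)])
qed

lemma unitary_cadj: "unitary n U \<Longrightarrow> unitary n (cadj U)"
  using unitaryD[of n U] unfolding unitary_def by simp

lemma unitary_one: "unitary n (1\<^sub>m n)"
  unfolding unitary_def by simp

lemma unitary_mult: assumes "unitary n U" "unitary n V" shows "unitary n (U * V)"
proof -
  note u = unitaryD[OF assms(1)] and v = unitaryD[OF assms(2)]
  have cu: "cadj U \<in> carrier_mat n n" "cadj V \<in> carrier_mat n n" using u v by simp_all
  have a: "cadj U * (U * V) = V"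
    using assoc_mult_mat[OF cu(1) u(1) v(1)] u v by simp
  have "cadj (U * V) * (U * V) = cadj V * cadj U * (U * V)"
    using u v by (simp add: cadj_mult)
  also have "\<dots> = cadj V * (cadj U * (U * V))" 
    using assoc_mult_mat[OF cu(2) cu(1) mult_carrier_mat[OF u(1) v(1)]] .
  also have "\<dots> = 1\<^sub>m n" using v a by simp
  finally show ?thesis using u v unfolding unitary_def by simp
qed

definition rdiag :: "real list \<Rightarrow> complex mat" where
  "rdiag es = mat (length es) (length es) (\<lambda>(i,j). if i = j then complex_of_real (es ! i) else 0)"

lemma rdiag_carrier[simp]: "rdiag es \<in> carrier_mat (length es) (length es)"
  unfolding rdiag_def by simp

lemma rdiag_dim[simp]: "dim_row (rdiag es) = length es" "dim_col (rdiag es) = length es"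
  unfolding rdiag_def by simp_all

lemma index_rdiag[simp]: "i < length es \<Longrightarrow> j < length es \<Longrightarrow>
  rdiag es $$ (i,j) = (if i = j then complex_of_real (es ! i) else 0)"
  unfolding rdiag_def by simp

lemma cadj_rdiag[simp]: "cadj (rdiag es) = rdiag es"
  by (rule eq_matI) simp_all

lemma rdiag_cons: "rdiag (x # es) = four_block_mat (rdiag [x]) (0\<^sub>m 1 (length es)) (0\<^sub>m (length es) 1) (rdiag es)"
proof (rule eq_matI)
  fix i j assume "i < dim_row (four_block_mat (rdiag [x]) (0\<^sub>m 1 (length es)) (0\<^sub>m (length es) 1) (rdiag es))"
    "j < dim_col (four_block_mat (rdiag [x]) (0\<^sub>m 1 (length es)) (0\<^sub>m (length es) 1) (rdiag es))"
  then have i: "i < Suc (length es)" and j: "j < Suc (length es)" by simp_all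
  show "rdiag (x # es) $$ (i, j) =
    four_block_mat (rdiag [x]) (0\<^sub>m 1 (length es)) (0\<^sub>m (length es) 1) (rdiag es) $$ (i, j)"
  proof -
    have "four_block_mat (rdiag [x]) (0\<^sub>m 1 (length es)) (0\<^sub>m (length es) 1) (rdiag es) $$ (i, j)
      = (if i < 1 then if j < 1 then rdiag [x] $$ (i,j) else 0\<^sub>m 1 (length es) $$ (i, j - 1)
         else if j < 1 then 0\<^sub>m (length es) 1 $$ (i - 1, j) else rdiag es $$ (i - 1, j - 1))"
      using i j by (subst index_mat_four_block) simp_all
    also have "\<dots> = rdiag (x # es) $$ (i, j)"
    proof (cases "i = 0")
      case True
      then show ?thesis using j by (cases "j = 0") simp_all
    next
      case False
      then obtain i' where i': "i = Suc i'" by (cases i) simp_all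
      show ?thesis
      proof (cases "j = 0")
        case True then show ?thesis using i i' by simp
      next
        case False
        then obtain j' where j': "j = Suc j'" by (cases j) simp_all
        show ?thesis using i j i' j' by simp
      qed
    qed
    finally show ?thesis by simp
  qed
qed simp_all

lemma char_poly_rdiag: "char_poly (rdiag es) = (\<Prod>x\<leftarrow>es. [:- complex_of_real x, 1:])"
proof -
  have ut: "upper_triangular (rdiag es)" unfolding upper_triangular_def by simp
  have dm: "diag_mat (rdiag es) = map complex_of_real es"
  proof (rule nth_equalityI)
    show "length (diag_mat (rdiag es)) = length (map complex_of_real es)"
      unfolding diag_mat_def by simp
    fix i assume "i < length (diag_mat (rdiag es))"
    then show "diag_mat (rdiag es) ! i = map complex_of_real es ! i"
      unfolding diag_mat_def by simp
  qed
  have "char_poly (rdiag es) = (\<Prod>a\<leftarrow>map complex_of_real es. [:-a,1:])"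
    using char_poly_upper_triangular[OF rdiag_carrier ut] unfolding dm .
  also have "\<dots> = (\<Prod>x\<leftarrow>es. [:- complex_of_real x, 1:])"
    by (simp only: map_map o_def)
  finally show ?thesis .
qed

lemma cscalar_sum: assumes "u \<in> carrier_vec n" "w \<in> carrier_vec n"
  shows "u \<bullet>c w = (\<Sum>k<n. u $ k * cnj (w $ k))"
  using assms by (simp add: scalar_prod_def lessThan_atLeast0)

definition nrm :: "complex vec \<Rightarrow> complex vec" where
  "nrm w = complex_of_real (1 / sqrt (Re (w \<bullet>c w))) \<cdot>\<^sub>v w"

lemma nrm_carrier[simp]: "w \<in> carrier_vec n \<Longrightarrow> nrm w \<in> carrier_vec n"
  unfolding nrm_def by simp

lemma nrm_sprod: assumes "u \<in> carrier_vec n" "w \<in> carrier_vec n"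
  shows "nrm u \<bullet>c nrm w = complex_of_real (1 / sqrt (Re (u \<bullet>c u))) *
     complex_of_real (1 / sqrt (Re (w \<bullet>c w))) * (u \<bullet>c w)"
  using assms unfolding nrm_def by (simp add: conjugate_smult_vec)

lemma pos_sprod: assumes "w \<in> carrier_vec n" "w \<noteq> 0\<^sub>v n"
  shows "Im (w \<bullet>c w) = 0" "Re (w \<bullet>c w) > 0"
proof -
  have "w \<bullet>c w > 0" using assms by simp
  then show "Im (w \<bullet>c w) = 0" "Re (w \<bullet>c w) > 0" by (simp_all add: less_complex_def)
qed

lemma nrm_self: assumes "w \<in> carrier_vec n" "w \<noteq> 0\<^sub>v n"
  shows "nrm w \<bullet>c nrm w = 1"
proof -
  note p = pos_sprod[OF assms]
  define c where "c = w \<bullet>c w"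
  define r where "r = Re c"
  have p1: "Im c = 0" and p2: "r > 0" using p unfolding c_def r_def by simp_all
  have e: "c = complex_of_real r" using p1 unfolding r_def by (simp add: complex_eq_iff)
  have "nrm w \<bullet>c nrm w = complex_of_real (1 / sqrt r) * complex_of_real (1 / sqrt r) * c"
    unfolding nrm_sprod[OF assms(1) assms(1)] c_def r_def ..
  also have "\<dots> = complex_of_real (1 / sqrt r * (1 / sqrt r) * r)"
    by (simp only: e of_real_mult)
  also have "1 / sqrt r * (1 / sqrt r) * r = 1" using p2
    by (simp add: field_simps)
  finally show ?thesis by simp
qed

lemma nrm_unit: assumes "w \<in> carrier_vec n" "w \<bullet>c w = 1" shows "nrm w = w"
  unfolding nrm_def assms(2) by simp

lemma unitary_cancel: assumes "unitary n U" "X \<in> carrier_mat n k"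
  shows "U * (cadj U * X) = X" "cadj U * (U * X) = X"
proof -
  note u = unitaryD[OF assms(1)]
  have cu: "cadj U \<in> carrier_mat n n" using u(1) by simp
  have "U * (cadj U * X) = (U * cadj U) * X" by (rule assoc_mult_mat[symmetric, OF u(1) cu assms(2)])
  then show "U * (cadj U * X) = X" using u(3) assms(2) by simp
  have "cadj U * (U * X) = (cadj U * U) * X" by (rule assoc_mult_mat[symmetric, OF cu u(1) assms(2)])
  then show "cadj U * (U * X) = X" using u(2) assms(2) by simp
qed

lemma index_mat_of_cols: "i < n \<Longrightarrow> j < length ws \<Longrightarrow> mat_of_cols n ws $$ (i,j) = ws ! j $ i"
  unfolding mat_of_cols_def by simp

lemma cadj_mat_of_cols: assumes "set ws \<subseteq> carrier_vec n" "length ws = k"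
  and "\<And>i j. i < k \<Longrightarrow> j < k \<Longrightarrow> ws ! j \<bullet>c ws ! i = (if i = j then 1 else 0)"
  shows "cadj (mat_of_cols n ws) * mat_of_cols n ws = 1\<^sub>m k"
proof (rule eq_matI)
  fix i j assume "i < dim_row (1\<^sub>m k)" "j < dim_col (1\<^sub>m k)"
  then have i: "i < k" and j: "j < k" by simp_all
  have wi: "ws ! i \<in> carrier_vec n" using assms(1,2) i nth_mem[of i ws] by blast
  have wj: "ws ! j \<in> carrier_vec n" using assms(1,2) j nth_mem[of j ws] by blast
  have "(cadj (mat_of_cols n ws) * mat_of_cols n ws) $$ (i,j) = (\<Sum>l<n. cnj (ws ! i $ l) * ws ! j $ l)"
    using i j assms(2) by (simp add: scalar_prod_def lessThan_atLeast0 index_mat_of_cols)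
  also have "\<dots> = ws ! j \<bullet>c ws ! i" using cscalar_sum[OF wj wi] by (simp add: mult.commute)
  also have "\<dots> = 1\<^sub>m k $$ (i,j)" using assms(3)[OF i j] i j by simp
  finally show "(cadj (mat_of_cols n ws) * mat_of_cols n ws) $$ (i,j) = 1\<^sub>m k $$ (i,j)" .
qed (use assms(2) in simp_all)

lemma block_eq: assumes A: "A \<in> carrier_mat (Suc m) (Suc m)" and C': "C' \<in> carrier_mat m m"
  and a: "A $$ (0,0) = a"
  and r0: "\<And>j. j < Suc m \<Longrightarrow> 0 < j \<Longrightarrow> A $$ (0,j) = 0"
  and c0: "\<And>i. i < Suc m \<Longrightarrow> 0 < i \<Longrightarrow> A $$ (i,0) = 0"
  and rest: "\<And>i j. i < m \<Longrightarrow> j < m \<Longrightarrow> C' $$ (i,j) = A $$ (Suc i, Suc j)"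
  shows "A = four_block_mat (mat 1 1 (\<lambda>_. a)) (0\<^sub>m 1 m) (0\<^sub>m m 1) C'"
proof (rule eq_matI)
  fix i j assume "i < dim_row (four_block_mat (mat 1 1 (\<lambda>_. a)) (0\<^sub>m 1 m) (0\<^sub>m m 1) C')"
    "j < dim_col (four_block_mat (mat 1 1 (\<lambda>_. a)) (0\<^sub>m 1 m) (0\<^sub>m m 1) C')"
  then have i: "i < Suc m" and j: "j < Suc m" using C' by simp_all
  have "four_block_mat (mat 1 1 (\<lambda>_. a)) (0\<^sub>m 1 m) (0\<^sub>m m 1) C' $$ (i, j)
      = (if i < 1 then if j < 1 then mat 1 1 (\<lambda>_. a) $$ (i,j) else 0\<^sub>m 1 m $$ (i, j - 1)
         else if j < 1 then 0\<^sub>m m 1 $$ (i - 1, j) else C' $$ (i - 1, j - 1))"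
    using i j C' by (subst index_mat_four_block) simp_all
  also have "\<dots> = A $$ (i, j)"
  proof (cases "i = 0")
    case True
    then show ?thesis using j a r0 by (cases "j = 0") simp_all
  next
    case False
    then obtain i' where i': "i = Suc i'" by (cases i) simp_all
    show ?thesis
    proof (cases "j = 0")
      case True then show ?thesis using i i' c0 by simp
    next
      case False
      then obtain j' where j': "j = Suc j'" by (cases j) simp_all
      show ?thesis using i j i' j' rest by simp
    qed
  qed
  finally show "A $$ (i, j) = four_block_mat (mat 1 1 (\<lambda>_. a)) (0\<^sub>m 1 m) (0\<^sub>m m 1) C' $$ (i, j)" by simp
qed (use A C' in simp_all)

lemma rdiag_single: "rdiag [x] = mat 1 1 (\<lambda>_. complex_of_real x)"
  by (rule eq_matI) simp_all

lemma rdiag_carrier': "length es = n \<Longrightarrow> rdiag es \<in> carrier_mat n n"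
  using rdiag_carrier[of es] by simp

lemma spectral:
  assumes "C \<in> carrier_mat n n" "cadj C = C"
    "char_poly C = (\<Prod>x\<leftarrow>es. [:- complex_of_real x, 1:])"
  shows "\<exists>U. unitary n U \<and> C = U * rdiag es * cadj U"
  using assms
proof (induct es arbitrary: n C)
  case Nil
  have "degree (char_poly C) = n" using degree_monic_char_poly[OF Nil(1)] by simp
  then have n0: "n = 0" using Nil(3) by simp
  have "C = 1\<^sub>m 0 * rdiag [] * cadj (1\<^sub>m 0)"
    by (rule eq_matI) (use Nil(1) n0 in simp_all)
  then show ?case using unitary_one[of 0] n0 by blast
next
  case (Cons x es n C)
  have C: "C \<in> carrier_mat n n" and hC: "cadj C = C" using Cons by simp_all
  let ?x = "complex_of_real x"
  have cp: "char_poly C = [:- ?x, 1:] * (\<Prod>x\<leftarrow>es. [:- complex_of_real x, 1:])"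
    using Cons(4) by simp
  have "degree (char_poly C) = n" using degree_monic_char_poly[OF C] by simp
  moreover have "degree (\<Prod>y\<leftarrow>x # es. [:- complex_of_real y, 1:]) = length (x # es)"
    by (rule degree_linear_factors)
  ultimately have n: "n = Suc (length es)" using Cons(4) by simp
  define m where "m = length es"
  have nm: "n = Suc m" using n m_def by simp
  have ev: "eigenvalue C ?x"
    unfolding eigenvalue_root_char_poly[OF C] cp by simp
  define v0 where "v0 = find_eigenvector C ?x"
  have "eigenvector C v0 ?x" unfolding v0_def by (rule find_eigenvector[OF C ev])
  then have v0: "v0 \<in> carrier_vec n" "v0 \<noteq> 0\<^sub>v n" "C *\<^sub>v v0 = ?x \<cdot>\<^sub>v v0"
    unfolding eigenvector_def using C by simp_all
  define v where "v = nrm v0"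
  have v: "v \<in> carrier_vec n" using v0(1) unfolding v_def by simp
  have vv: "v \<bullet>c v = 1" unfolding v_def by (rule nrm_self[OF v0(1,2)])
  have vnz: "v \<noteq> 0\<^sub>v n" using vv conjugate_square_eq_0_vec[OF v] by force
  define c where "c = complex_of_real (1 / sqrt (Re (v0 \<bullet>c v0)))"
  have vc: "v = c \<cdot>\<^sub>v v0" unfolding v_def nrm_def c_def ..
  have "C *\<^sub>v v = c \<cdot>\<^sub>v (C *\<^sub>v v0)" unfolding vc by (rule mult_mat_vec[OF C v0(1)])
  also have "\<dots> = c \<cdot>\<^sub>v (?x \<cdot>\<^sub>v v0)" unfolding v0(3) ..
  also have "\<dots> = ?x \<cdot>\<^sub>v v" unfolding vc smult_smult_assoc by (simp add: mult.commute)
  finally have Cv: "C *\<^sub>v v = ?x \<cdot>\<^sub>v v" .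
  interpret cof_vec_space n "TYPE(complex)" .
  define b where "b = basis_completion v"
  note bc = basis_completion[OF v vnz, folded b_def]
  obtain vs where bv: "b = v # vs" using bc(6,7) nm by (cases b) simp_all
  define ws where "ws = gram_schmidt n b"
  note gs = gram_schmidt_result[OF bc(2) bc(4) bc(5) ws_def]
  have hdws: "hd ws = v" unfolding ws_def bv by (rule gram_schmidt_hd[OF v])
  have lws: "length ws = n" using gs(4) bc(6) by simp
  have wsc: "ws ! i \<in> carrier_vec n" if "i < n" for i
    using gs(3) nth_mem[of i ws] lws that by blast
  have wsnz: "ws ! i \<noteq> 0\<^sub>v n" if i: "i < n" for i
  proof
    assume "ws ! i = 0\<^sub>v n"
    then have "ws ! i \<bullet>c ws ! i = 0" using conjugate_square_eq_0_vec[OF wsc[OF i]] by simp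
    then show False using corthogonalD[OF gs(2), of i i] lws i by simp
  qed
  define us where "us = map nrm ws"
  have lus: "length us = n" unfolding us_def using lws by simp
  have usn: "us ! i = nrm (ws ! i)" if "i < n" for i unfolding us_def using that lws by simp
  have usc: "us ! i \<in> carrier_vec n" if "i < n" for i using usn[OF that] wsc[OF that] by simp
  have us_set: "set us \<subseteq> carrier_vec n"
  proof
    fix u assume "u \<in> set us"
    then obtain i where "i < length us" "u = us ! i" by (metis in_set_conv_nth)
    then show "u \<in> carrier_vec n" using usc lus by simp
  qed
  have orth: "us ! j \<bullet>c us ! i = (if i = j then 1 else 0)" if i: "i < n" and j: "j < n" for i j
  proof (cases "i = j")
    case True
    then show ?thesis using usn[OF i] nrm_self[OF wsc[OF i] wsnz[OF i]] by simp
  next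
    case False
    have "ws ! j \<bullet>c ws ! i = 0" using corthogonalD[OF gs(2), of j i] lws i j False by simp
    then show ?thesis using usn[OF i] usn[OF j] nrm_sprod[OF wsc[OF j] wsc[OF i]] False by simp
  qed
  have us0: "us ! 0 = v"
  proof -
    have "ws \<noteq> []" using lws nm by (cases ws) simp_all
    then have "ws ! 0 = v" using hdws by (simp add: hd_conv_nth)
    then show ?thesis using usn[of 0] nm nrm_unit[OF v vv] by simp
  qed
  define W where "W = mat_of_cols n us"
  have W: "W \<in> carrier_mat n n" unfolding W_def using mat_of_cols_carrier(1)[of n us] lus by simp
  have cW: "cadj W \<in> carrier_mat n n" using W by simp
  have uW: "unitary n W" unfolding unitary_def
    using W cadj_mat_of_cols[OF us_set lus orth] unfolding W_def by simp
  have colW0: "col W 0 = v" unfolding W_def using col_mat_of_cols[of 0 us n] lus nm usc[of 0] us0 by simp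
  define A' where "A' = cadj W * C * W"
  have A': "A' \<in> carrier_mat n n" unfolding A'_def using W C cW by (meson mult_carrier_mat)
  have cWC: "cadj W * C \<in> carrier_mat n n" using cW C by (rule mult_carrier_mat)
  have hA': "cadj A' = A'" unfolding A'_def
    by (subst cadj_mult[OF cWC W], subst cadj_mult[OF cW C]) (simp add: hC assoc_mult_mat[OF cW C W])
  have col0: "A' $$ (i,0) = (if i = 0 then ?x else 0)" if i: "i < n" for i
  proof -
    have "A' $$ (i,0) = (cadj W * (C * W)) $$ (i,0)" unfolding A'_def assoc_mult_mat[OF cW C W] ..
    also have "\<dots> = row (cadj W) i \<bullet> col (C * W) 0" using i W C nm by simp
    also have "col (C * W) 0 = ?x \<cdot>\<^sub>v v" using col_mult2[OF C W, of 0] nm colW0 Cv by simp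
    also have "row (cadj W) i \<bullet> (?x \<cdot>\<^sub>v v) = ?x * (row (cadj W) i \<bullet> v)" by (rule scalar_prod_smult_right) (use v W in simp)
    also have "row (cadj W) i \<bullet> v = (\<Sum>l<n. v $ l * cnj (us ! i $ l))"
      using v i W lus unfolding W_def by (simp add: scalar_prod_def lessThan_atLeast0 index_mat_of_cols mult.commute)
    also have "\<dots> = us ! 0 \<bullet>c us ! i" unfolding us0 using cscalar_sum[OF v usc[OF i]] by simp
    also have "\<dots> = (if i = 0 then 1 else 0)" using orth[OF i, of 0] nm by simp
    finally show ?thesis by simp
  qed
  have row0: "A' $$ (0,j) = (if j = 0 then ?x else 0)" if j: "j < n" for j
  proof -
    have "A' $$ (0,j) = cadj A' $$ (0,j)" using hA' by simp
    also have "\<dots> = cnj (A' $$ (j,0))" using A' j nm by simp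
    finally show ?thesis using col0[OF j] by simp
  qed
  define C' where "C' = mat m m (\<lambda>(i,j). A' $$ (Suc i, Suc j))"
  have C': "C' \<in> carrier_mat m m" unfolding C'_def by simp
  have blk: "A' = four_block_mat (rdiag [x]) (0\<^sub>m 1 m) (0\<^sub>m m 1) C'"
    unfolding rdiag_single
    by (rule block_eq) (use A' nm C' col0 row0 in \<open>simp_all add: C'_def\<close>)
  have hC': "cadj C' = C'"
  proof (rule eq_matI)
    fix i j assume "i < dim_row C'" "j < dim_col C'"
    then have i: "i < m" and j: "j < m" using C' by simp_all
    have "cadj C' $$ (i,j) = cnj (A' $$ (Suc j, Suc i))" using i j unfolding C'_def by simp
    also have "\<dots> = cadj A' $$ (Suc i, Suc j)" using i j A' nm by simp
    also have "\<dots> = C' $$ (i,j)" using i j hA' unfolding C'_def by simp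
    finally show "cadj C' $$ (i,j) = C' $$ (i,j)" .
  qed (use C' in simp_all)
  have dA': "dim_row A' = n" using A' by simp
  have "similar_mat_wit A' C (cadj W) W"
    unfolding similar_mat_wit_def Let_def dA'
  proof (intro conjI)
    show "{A', C, cadj W, W} \<subseteq> carrier_mat n n" using A' C cW W by simp
  qed (use unitaryD[OF uW] A'_def in simp_all)
  then have sim: "similar_mat A' C" unfolding similar_mat_def by blast
  have "char_poly C = char_poly A'" using char_poly_similar[OF sim] by simp
  also have "\<dots> = char_poly (rdiag [x]) * char_poly C'" unfolding blk
    by (rule char_poly_four_block_zeros_col) (use C' rdiag_carrier'[of "[x]" 1] in simp_all)
  also have "char_poly (rdiag [x]) = [:- ?x, 1:]" unfolding char_poly_rdiag by simp
  finally have eqp: "[:- ?x, 1:] * char_poly C' = [:- ?x, 1:] * (\<Prod>x\<leftarrow>es. [:- complex_of_real x, 1:])"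
    using cp by simp
  have nz: "[:- ?x, 1:] \<noteq> 0" by simp
  have cpC': "char_poly C' = (\<Prod>x\<leftarrow>es. [:- complex_of_real x, 1:])"
    using mult_left_cancel[OF nz] eqp by blast
  obtain U' where uU': "unitary m U'" and C'eq: "C' = U' * rdiag es * cadj U'"
    using Cons(1)[OF C' hC' cpC'] by blast
  note u' = unitaryD[OF uU']
  have cU': "cadj U' \<in> carrier_mat m m" using u' by simp
  define Bk where "Bk = four_block_mat (1\<^sub>m 1) (0\<^sub>m 1 m) (0\<^sub>m m 1) U'"
  have Bk: "Bk \<in> carrier_mat n n" unfolding Bk_def
    using four_block_carrier_mat[OF one_carrier_mat[of 1] u'(1), of "0\<^sub>m 1 m" "0\<^sub>m m 1"] nm by simp
  note o1 = one_carrier_mat[of 1] and z1 = zero_carrier_mat[of 1 m] and z2 = zero_carrier_mat[of m 1]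
  have cBk: "cadj Bk = four_block_mat (1\<^sub>m 1) (0\<^sub>m 1 m) (0\<^sub>m m 1) (cadj U')"
    unfolding Bk_def by (subst cadj_four_block[OF o1 z1 z2 u'(1)]) simp
  have "cadj Bk * Bk = four_block_mat (1\<^sub>m 1) (0\<^sub>m 1 m) (0\<^sub>m m 1) (cadj U' * U')"
    unfolding cBk unfolding Bk_def using u' cU' by (subst mult_four_block_mat[OF o1 z1 z2 cU' o1 z1 z2 u'(1)]) simp
  then have uBk: "unitary n Bk" unfolding unitary_def using u' Bk nm by simp
  have R: "rdiag es \<in> carrier_mat m m" unfolding m_def by simp
  have Rx: "rdiag [x] \<in> carrier_mat 1 1" by (rule rdiag_carrier') simp
  have UR: "U' * rdiag es \<in> carrier_mat m m" using u'(1) R by (rule mult_carrier_mat)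
  have rc: "rdiag (x # es) = four_block_mat (rdiag [x]) (0\<^sub>m 1 m) (0\<^sub>m m 1) (rdiag es)"
    unfolding m_def by (rule rdiag_cons)
  have eqBR: "Bk * rdiag (x # es) = four_block_mat (rdiag [x]) (0\<^sub>m 1 m) (0\<^sub>m m 1) (U' * rdiag es)"
    unfolding Bk_def rc using u' R Rx
    by (subst mult_four_block_mat[OF o1 z1 z2 u'(1) Rx z1 z2 R]) (simp add: m_def[symmetric])
  have "Bk * rdiag (x # es) * cadj Bk = four_block_mat (rdiag [x]) (0\<^sub>m 1 m) (0\<^sub>m m 1) (U' * rdiag es * cadj U')"
    unfolding cBk eqBR using u' R cU' Rx UR by (subst mult_four_block_mat[OF Rx z1 z2 UR o1 z1 z2 cU']) (simp add: m_def[symmetric] left_add_zero_mat[OF mult_carrier_mat[OF UR cU']])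
  then have A'eq: "A' = Bk * rdiag (x # es) * cadj Bk" unfolding blk C'eq by simp
  have R2: "rdiag (x # es) \<in> carrier_mat n n" using n by (intro rdiag_carrier') simp
  have cBk2: "cadj Bk \<in> carrier_mat n n" using Bk by simp
  have A'c: "A' * cadj W = cadj W * C"
  proof -
    have "A' * cadj W = (cadj W * C) * (W * cadj W)" unfolding A'_def by (rule assoc_mult_mat[OF cWC W cW])
    then show ?thesis using unitaryD(3)[OF uW] right_mult_one_mat[OF cWC] by simp
  qed
  have "C = W * (A' * cadj W)" unfolding A'c using unitary_cancel(1)[OF uW C] by simp
  also have "\<dots> = W * A' * cadj W" by (rule assoc_mult_mat[symmetric, OF W A' cW])
  also have "\<dots> = W * (Bk * rdiag (x # es) * cadj Bk) * cadj W" unfolding A'eq ..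
  also have "\<dots> = (W * Bk) * rdiag (x # es) * cadj (W * Bk)"
  proof -
    have BR: "Bk * rdiag (x # es) \<in> carrier_mat n n" using Bk R2 by (rule mult_carrier_mat)
    have BRB: "Bk * rdiag (x # es) * cadj Bk \<in> carrier_mat n n" using BR cBk2 by (rule mult_carrier_mat)
    have cBW: "cadj Bk * cadj W \<in> carrier_mat n n" using cBk2 cW by (rule mult_carrier_mat)
    have "(W * Bk) * rdiag (x # es) * cadj (W * Bk) = W * (Bk * rdiag (x # es)) * (cadj Bk * cadj W)"
      unfolding cadj_mult[OF W Bk] assoc_mult_mat[OF W Bk R2] ..
    also have "\<dots> = W * (Bk * rdiag (x # es) * (cadj Bk * cadj W))"
      by (rule assoc_mult_mat[OF W BR cBW])
    also have "Bk * rdiag (x # es) * (cadj Bk * cadj W) = Bk * rdiag (x # es) * cadj Bk * cadj W"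
      by (rule assoc_mult_mat[symmetric, OF BR cBk2 cW])
    also have "W * (Bk * rdiag (x # es) * cadj Bk * cadj W) = W * (Bk * rdiag (x # es) * cadj Bk) * cadj W"
      by (rule assoc_mult_mat[symmetric, OF W BRB cW])
    finally show ?thesis by simp
  qed
  finally show ?case using unitary_mult[OF uW uBk] by blast
qed

lemma sylvester_det:
  fixes P :: "'a :: idom mat" and x :: 'a
  assumes P: "P \<in> carrier_mat m n" and Q: "Q \<in> carrier_mat n m"
  shows "x ^ n * det (x \<cdot>\<^sub>m 1\<^sub>m m - P * Q) = x ^ m * det (x \<cdot>\<^sub>m 1\<^sub>m n - Q * P)"
proof -
  have dP: "dim_row P = m" "dim_col P = n" and dQ: "dim_row Q = n" "dim_col Q = m" using P Q by auto
  have PQ: "P * Q \<in> carrier_mat m m" and QP: "Q * P \<in> carrier_mat n n" using P Q by auto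
  have xm: "x \<cdot>\<^sub>m 1\<^sub>m m \<in> carrier_mat m m" and xn: "x \<cdot>\<^sub>m 1\<^sub>m n \<in> carrier_mat n n" by simp_all
  have mP: "- P \<in> carrier_mat m n" and mQ: "- Q \<in> carrier_mat n m" using P Q by simp_all
  note o1 = one_carrier_mat[of m] and o2 = one_carrier_mat[of n]
  note z12 = zero_carrier_mat[of m n] and z21 = zero_carrier_mat[of n m]
  define M where "M = four_block_mat (x \<cdot>\<^sub>m 1\<^sub>m m) P Q (1\<^sub>m n)"
  define L1 where "L1 = four_block_mat (1\<^sub>m m) (- P) (0\<^sub>m n m) (1\<^sub>m n)"
  define L2 where "L2 = four_block_mat (1\<^sub>m m) (0\<^sub>m m n) (- Q) (x \<cdot>\<^sub>m 1\<^sub>m n)"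
  have M: "M \<in> carrier_mat (m + n) (m + n)" unfolding M_def using xm P Q o2 by simp
  have L1: "L1 \<in> carrier_mat (m + n) (m + n)" unfolding L1_def using o1 mP z21 o2 by simp
  have L2: "L2 \<in> carrier_mat (m + n) (m + n)" unfolding L2_def using o1 z12 mQ xn by simp
  have b11: "1\<^sub>m m * (x \<cdot>\<^sub>m 1\<^sub>m m) + - P * Q = x \<cdot>\<^sub>m 1\<^sub>m m - P * Q"
    using dP dQ by (simp add: add_uminus_minus_mat[OF xm PQ])
  have b12: "1\<^sub>m m * P + - P * 1\<^sub>m n = 0\<^sub>m m n"
    using dP dQ P by (simp add: add_uminus_minus_mat[OF P P])
  have b21: "0\<^sub>m n m * (x \<cdot>\<^sub>m 1\<^sub>m m) + 1\<^sub>m n * Q = Q"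
    using dP dQ Q by simp
  have b22: "0\<^sub>m n m * P + 1\<^sub>m n * 1\<^sub>m n = 1\<^sub>m n"
    using dP dQ by simp
  have "L1 * M = four_block_mat (x \<cdot>\<^sub>m 1\<^sub>m m - P * Q) (0\<^sub>m m n) Q (1\<^sub>m n)"
    unfolding L1_def M_def
    by (subst mult_four_block_mat[OF o1 mP z21 o2 xm P Q o2]) (simp only: b11 b12 b21 b22)
  then have "det (L1 * M) = det (x \<cdot>\<^sub>m 1\<^sub>m m - P * Q) * det (1\<^sub>m n)"
    using det_four_block_mat_upper_right_zero[OF minus_carrier_mat[OF PQ] refl Q o2, of "x \<cdot>\<^sub>m 1\<^sub>m m"] by simp
  moreover have "det L1 = 1" unfolding L1_def
    using det_four_block_mat_lower_left_zero[OF o1 mP refl o2] by simp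
  ultimately have e1: "det M = det (x \<cdot>\<^sub>m 1\<^sub>m m - P * Q)"
    using det_mult[OF L1 M] by simp
  have c11: "1\<^sub>m m * (x \<cdot>\<^sub>m 1\<^sub>m m) + 0\<^sub>m m n * Q = x \<cdot>\<^sub>m 1\<^sub>m m"
    using dP dQ xm by simp
  have c12: "1\<^sub>m m * P + 0\<^sub>m m n * 1\<^sub>m n = P"
    using dP dQ P by simp
  have "- Q * (x \<cdot>\<^sub>m 1\<^sub>m m) = - (x \<cdot>\<^sub>m Q)"
    using dQ mult_smult_distrib[OF Q one_carrier_mat[of m], of x] by simp
  moreover have "x \<cdot>\<^sub>m 1\<^sub>m n * Q = x \<cdot>\<^sub>m Q"
    using dQ mult_smult_assoc_mat[OF one_carrier_mat[of n] Q, of x] by simp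
  ultimately have c21: "- Q * (x \<cdot>\<^sub>m 1\<^sub>m m) + x \<cdot>\<^sub>m 1\<^sub>m n * Q = 0\<^sub>m n m"
    using uminus_l_inv_mat[of "x \<cdot>\<^sub>m Q" n m] Q by simp
  have "- Q * P + x \<cdot>\<^sub>m 1\<^sub>m n * 1\<^sub>m n = - (Q * P) + x \<cdot>\<^sub>m 1\<^sub>m n"
    using dP dQ by simp
  also have "\<dots> = x \<cdot>\<^sub>m 1\<^sub>m n + - (Q * P)" 
    by (rule comm_add_mat[of _ n n]) (use QP in simp_all)
  also have "\<dots> = x \<cdot>\<^sub>m 1\<^sub>m n - Q * P" by (rule add_uminus_minus_mat[OF xn QP])
  finally have c22: "- Q * P + x \<cdot>\<^sub>m 1\<^sub>m n * 1\<^sub>m n = x \<cdot>\<^sub>m 1\<^sub>m n - Q * P" .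
  have "L2 * M = four_block_mat (x \<cdot>\<^sub>m 1\<^sub>m m) P (0\<^sub>m n m) (x \<cdot>\<^sub>m 1\<^sub>m n - Q * P)"
    unfolding L2_def M_def
    by (subst mult_four_block_mat[OF o1 z12 mQ xn xm P Q o2]) (simp only: c11 c12 c21 c22)
  then have "det (L2 * M) = det (x \<cdot>\<^sub>m 1\<^sub>m m) * det (x \<cdot>\<^sub>m 1\<^sub>m n - Q * P)"
    using det_four_block_mat_lower_left_zero[OF xm P refl minus_carrier_mat[OF QP], of "x \<cdot>\<^sub>m 1\<^sub>m n"] by simp
  moreover have "det L2 = det (1\<^sub>m m) * det (x \<cdot>\<^sub>m 1\<^sub>m n)" unfolding L2_def
    using det_four_block_mat_upper_right_zero[OF o1 refl mQ xn] by simp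
  ultimately have "det (1\<^sub>m m) * det (x \<cdot>\<^sub>m 1\<^sub>m n) * det M = det (x \<cdot>\<^sub>m 1\<^sub>m m) * det (x \<cdot>\<^sub>m 1\<^sub>m n - Q * P)"
    using det_mult[OF L2 M] by simp
  then show ?thesis unfolding e1 by simp
qed

lemma char_poly_matrix_alt: assumes "M \<in> carrier_mat n n"
  shows "char_poly_matrix M = [:0,1:] \<cdot>\<^sub>m 1\<^sub>m n - map_mat (\<lambda>a. [:a:]) M"
  unfolding char_poly_matrix_def
  by (rule eq_matI) (use assms in simp_all)

lemma char_poly_AB:
  fixes A :: "complex mat"
  assumes A: "A \<in> carrier_mat (Suc k) k" and B: "B \<in> carrier_mat k (Suc k)"
  shows "char_poly (A * B) = [:0,1:] * char_poly (B * A)"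
proof -
  let ?h = "map_mat (\<lambda>a. [:a:])"
  have hA: "?h A \<in> carrier_mat (Suc k) k" and hB: "?h B \<in> carrier_mat k (Suc k)" using A B by simp_all
  have AB: "A * B \<in> carrier_mat (Suc k) (Suc k)" and BA: "B * A \<in> carrier_mat k k"
    using A B by (simp_all add: mult_carrier_mat)
  have c1: "char_poly (A * B) = det ([:0,1:] \<cdot>\<^sub>m 1\<^sub>m (Suc k) - ?h A * ?h B)"
    unfolding char_poly_def char_poly_matrix_alt[OF AB] map_poly_mult(1)[OF A B] ..
  have c2: "char_poly (B * A) = det ([:0,1:] \<cdot>\<^sub>m 1\<^sub>m k - ?h B * ?h A)"
    unfolding char_poly_def char_poly_matrix_alt[OF BA] map_poly_mult(1)[OF B A] ..
  have "[:0,1:] ^ k * char_poly (A * B) = [:0,1:] ^ Suc k * char_poly (B * A)"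
    unfolding c1 c2 by (rule sylvester_det[OF hA hB])
  then have "[:0,1:] ^ k * char_poly (A * B) = [:0,1:] ^ k * ([:0,1:] * char_poly (B * A))"
    by (simp add: ac_simps)
  moreover have "([:0,1:] :: complex poly) ^ k \<noteq> 0" by simp
  ultimately show ?thesis using mult_left_cancel by blast
qed

definition msum :: "'e set \<Rightarrow> ('e \<Rightarrow> complex mat) \<Rightarrow> nat \<Rightarrow> complex mat" where
  "msum S X n = mat n n (\<lambda>pq. \<Sum>\<alpha>\<in>S. X \<alpha> $$ pq)"

lemma msum_carrier[simp]: "msum S X n \<in> carrier_mat n n"
  unfolding msum_def by simp

lemma moment_msum: "moment E s t nd f v =
  msum {\<alpha>\<in>E. t \<alpha> = v} (\<lambda>\<alpha>. f \<alpha> * cadj (f \<alpha>)) (nd v) - msum {\<alpha>\<in>E. s \<alpha> = v} (\<lambda>\<alpha>. cadj (f \<alpha>) * f \<alpha>) (nd v)"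
  unfolding moment_def msum_def by (rule eq_matI) simp_all

lemma conj_add: assumes U: "U \<in> carrier_mat k n" and X: "X \<in> carrier_mat n n" and Y: "Y \<in> carrier_mat n n"
  shows "U * (X + Y) * cadj U = U * X * cadj U + U * Y * cadj U"
proof -
  have cU: "cadj U \<in> carrier_mat n k" using U by simp
  have UX: "U * X \<in> carrier_mat k n" using U X by (rule mult_carrier_mat)
  have UY: "U * Y \<in> carrier_mat k n" using U Y by (rule mult_carrier_mat)
  show ?thesis unfolding mult_add_distrib_mat[OF U X Y] by (rule add_mult_distrib_mat[OF UX UY cU])
qed

lemma conj_minus: assumes U: "U \<in> carrier_mat k n" and X: "X \<in> carrier_mat n n" and Y: "Y \<in> carrier_mat n n"
  shows "U * (X - Y) * cadj U = U * X * cadj U - U * Y * cadj U"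
proof -
  have cU: "cadj U \<in> carrier_mat n k" using U by simp
  have UX: "U * X \<in> carrier_mat k n" using U X by (rule mult_carrier_mat)
  have UY: "U * Y \<in> carrier_mat k n" using U Y by (rule mult_carrier_mat)
  show ?thesis unfolding mult_minus_distrib_mat[OF U X Y] by (rule minus_mult_distrib_mat[OF UX UY cU])
qed

lemma msum_empty: "msum {} X n = 0\<^sub>m n n"
  unfolding msum_def by (rule eq_matI) simp_all

lemma msum_insert: assumes "finite S" "a \<notin> S" "X a \<in> carrier_mat n n"
  shows "msum (insert a S) X n = X a + msum S X n"
  unfolding msum_def by (rule eq_matI) (use assms in simp_all)

lemma msum_conj: assumes "finite S" "\<forall>\<alpha>\<in>S. X \<alpha> \<in> carrier_mat n n" "U \<in> carrier_mat k n"
  shows "U * msum S X n * cadj U = msum S (\<lambda>\<alpha>. U * X \<alpha> * cadj U) k"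
  using assms
proof (induct S rule: finite_induct)
  case empty
  have cU: "cadj U \<in> carrier_mat n k" using empty(2) by simp
  have "U * 0\<^sub>m n n * cadj U = 0\<^sub>m k k"
    using right_mult_zero_mat[OF empty(2), of n] left_mult_zero_mat[OF cU, of k] by simp
  then show ?case unfolding msum_empty .
next
  case (insert a S)
  have Xa: "X a \<in> carrier_mat n n" using insert by simp
  have cU: "cadj U \<in> carrier_mat n k" using insert by simp
  have UXa: "U * X a * cadj U \<in> carrier_mat k k"
    using mult_carrier_mat[OF mult_carrier_mat[OF insert(5) Xa] cU] .
  have "U * msum (insert a S) X n * cadj U = U * (X a + msum S X n) * cadj U"
    unfolding msum_insert[of S a X n, OF insert(1,2) Xa] ..
  also have "\<dots> = U * X a * cadj U + U * msum S X n * cadj U"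
    by (rule conj_add[OF insert(5) Xa msum_carrier])
  also have "U * msum S X n * cadj U = msum S (\<lambda>\<alpha>. U * X \<alpha> * cadj U) k"
    using insert by simp
  also have "U * X a * cadj U + msum S (\<lambda>\<alpha>. U * X \<alpha> * cadj U) k
     = msum (insert a S) (\<lambda>\<alpha>. U * X \<alpha> * cadj U) k"
    by (rule msum_insert[of S a "\<lambda>\<alpha>. U * X \<alpha> * cadj U" k, symmetric, OF insert(1,2) UXa])
  finally show ?case .
qed

lemma msum_cong: "(\<And>\<alpha>. \<alpha> \<in> S \<Longrightarrow> X \<alpha> = Y \<alpha>) \<Longrightarrow> msum S X n = msum S Y n"
  unfolding msum_def by simp

lemma conj_prod1: assumes U: "unitary a Ua" and V: "unitary b Ub" and F: "F \<in> carrier_mat a b"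
  shows "(Ua * F * cadj Ub) * cadj (Ua * F * cadj Ub) = Ua * (F * cadj F) * cadj Ua"
proof -
  note u = unitaryD[OF U] and v = unitaryD[OF V]
  have cUa: "cadj Ua \<in> carrier_mat a a" and cUb: "cadj Ub \<in> carrier_mat b b" using u v by simp_all
  have cF: "cadj F \<in> carrier_mat b a" using F by simp
  have UF: "Ua * F \<in> carrier_mat a b" using u(1) F by (rule mult_carrier_mat)
  have UFc: "Ua * F * cadj Ub \<in> carrier_mat a b" using UF cUb by (rule mult_carrier_mat)
  have "cadj (Ua * F * cadj Ub) = Ub * (cadj F * cadj Ua)"
    unfolding cadj_mult[OF UF cUb] cadj_mult[OF u(1) F] cadj_cadj ..
  then have "(Ua * F * cadj Ub) * cadj (Ua * F * cadj Ub) = (Ua * F * cadj Ub) * (Ub * (cadj F * cadj Ua))"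
    by simp
  also have "\<dots> = Ua * F * (cadj Ub * (Ub * (cadj F * cadj Ua)))"
    using assoc_mult_mat[OF UF cUb mult_carrier_mat[OF v(1) mult_carrier_mat[OF cF cUa]]] .
  also have "cadj Ub * (Ub * (cadj F * cadj Ua)) = cadj F * cadj Ua"
    using unitary_cancel(2)[OF V mult_carrier_mat[OF cF cUa]] .
  also have "Ua * F * (cadj F * cadj Ua) = Ua * (F * (cadj F * cadj Ua))"
    using assoc_mult_mat[OF u(1) F mult_carrier_mat[OF cF cUa]] .
  also have "F * (cadj F * cadj Ua) = F * cadj F * cadj Ua"
    using assoc_mult_mat[OF F cF cUa] by simp
  also have "Ua * (F * cadj F * cadj Ua) = Ua * (F * cadj F) * cadj Ua"
    using assoc_mult_mat[OF u(1) mult_carrier_mat[OF F cF] cUa] by simp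
  finally show ?thesis .
qed

lemma conj_prod2: assumes U: "unitary a Ua" and V: "unitary b Ub" and F: "F \<in> carrier_mat a b"
  shows "cadj (Ua * F * cadj Ub) * (Ua * F * cadj Ub) = Ub * (cadj F * F) * cadj Ub"
proof -
  have cF: "cadj F \<in> carrier_mat b a" using F by simp
  have "cadj (Ua * F * cadj Ub) = Ub * cadj F * cadj Ua"
  proof -
    note u = unitaryD[OF U] and v = unitaryD[OF V]
    have UF: "Ua * F \<in> carrier_mat a b" using u(1) F by (rule mult_carrier_mat)
    have "cadj (Ua * F * cadj Ub) = Ub * (cadj F * cadj Ua)"
      unfolding cadj_mult[OF UF cadj_carrier_mat[OF v(1)]] cadj_mult[OF u(1) F] cadj_cadj ..
    also have "\<dots> = Ub * cadj F * cadj Ua"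
      using assoc_mult_mat[OF v(1) cF cadj_carrier_mat[OF u(1)]] by simp
    finally show ?thesis .
  qed
  moreover have "(Ub * cadj F * cadj Ua) * cadj (Ub * cadj F * cadj Ua) = Ub * (cadj F * cadj (cadj F)) * cadj Ub"
    by (rule conj_prod1[OF V U cF])
  moreover have "cadj (Ub * cadj F * cadj Ua) = Ua * F * cadj Ub"
  proof -
    note u = unitaryD[OF U] and v = unitaryD[OF V]
    have UF: "Ub * cadj F \<in> carrier_mat b a" using v(1) cF by (rule mult_carrier_mat)
    have "cadj (Ub * cadj F * cadj Ua) = Ua * (F * cadj Ub)"
      unfolding cadj_mult[OF UF cadj_carrier_mat[OF u(1)]] cadj_mult[OF v(1) cF] cadj_cadj ..
    also have "\<dots> = Ua * F * cadj Ub"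
      using assoc_mult_mat[OF u(1) F cadj_carrier_mat[OF v(1)]] by simp
    finally show ?thesis .
  qed
  ultimately show ?thesis by simp
qed

lemma moment_conj:
  assumes E: "finite E" and f: "f \<in> rep_space E s t nd" and U: "\<forall>w. unitary (nd w) (U w)"
  shows "moment E s t nd (\<lambda>\<alpha>. U (t \<alpha>) * f \<alpha> * cadj (U (s \<alpha>))) v = U v * moment E s t nd f v * cadj (U v)"
proof -
  let ?f = "\<lambda>\<alpha>. U (t \<alpha>) * f \<alpha> * cadj (U (s \<alpha>))"
  let ?In = "{\<alpha>\<in>E. t \<alpha> = v}" and ?Out = "{\<alpha>\<in>E. s \<alpha> = v}"
  have fa: "f \<alpha> \<in> carrier_mat (nd (t \<alpha>)) (nd (s \<alpha>))" if "\<alpha> \<in> E" for \<alpha>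
    using f that unfolding rep_space_def by simp
  have Uv: "U v \<in> carrier_mat (nd v) (nd v)" using unitaryD(1) U by blast
  have fin1: "finite ?In" and fin2: "finite ?Out" using E by simp_all
  have "msum ?In (\<lambda>\<alpha>. ?f \<alpha> * cadj (?f \<alpha>)) (nd v) = msum ?In (\<lambda>\<alpha>. U v * (f \<alpha> * cadj (f \<alpha>)) * cadj (U v)) (nd v)"
  proof (rule msum_cong)
    fix \<alpha> assume a: "\<alpha> \<in> ?In"
    then show "?f \<alpha> * cadj (?f \<alpha>) = U v * (f \<alpha> * cadj (f \<alpha>)) * cadj (U v)"
      using conj_prod1[OF spec[OF U, of "t \<alpha>"] spec[OF U, of "s \<alpha>"] fa[of \<alpha>]] by simp
  qed
  also have "\<dots> = U v * msum ?In (\<lambda>\<alpha>. f \<alpha> * cadj (f \<alpha>)) (nd v) * cadj (U v)"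
  proof (rule msum_conj[symmetric, OF fin1 _ Uv], intro ballI)
    fix \<alpha> assume a: "\<alpha> \<in> ?In"
    then have "f \<alpha> \<in> carrier_mat (nd v) (nd (s \<alpha>))" using fa[of \<alpha>] by simp
    then show "f \<alpha> * cadj (f \<alpha>) \<in> carrier_mat (nd v) (nd v)"
      using mult_carrier_mat cadj_carrier_mat by blast
  qed
  finally have m1: "msum ?In (\<lambda>\<alpha>. ?f \<alpha> * cadj (?f \<alpha>)) (nd v) = U v * msum ?In (\<lambda>\<alpha>. f \<alpha> * cadj (f \<alpha>)) (nd v) * cadj (U v)" .
  have "msum ?Out (\<lambda>\<alpha>. cadj (?f \<alpha>) * ?f \<alpha>) (nd v) = msum ?Out (\<lambda>\<alpha>. U v * (cadj (f \<alpha>) * f \<alpha>) * cadj (U v)) (nd v)"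
  proof (rule msum_cong)
    fix \<alpha> assume a: "\<alpha> \<in> ?Out"
    then show "cadj (?f \<alpha>) * ?f \<alpha> = U v * (cadj (f \<alpha>) * f \<alpha>) * cadj (U v)"
      using conj_prod2[OF spec[OF U, of "t \<alpha>"] spec[OF U, of "s \<alpha>"] fa[of \<alpha>]] by simp
  qed
  also have "\<dots> = U v * msum ?Out (\<lambda>\<alpha>. cadj (f \<alpha>) * f \<alpha>) (nd v) * cadj (U v)"
  proof (rule msum_conj[symmetric, OF fin2 _ Uv], intro ballI)
    fix \<alpha> assume a: "\<alpha> \<in> ?Out"
    then have "f \<alpha> \<in> carrier_mat (nd (t \<alpha>)) (nd v)" using fa[of \<alpha>] by simp
    then show "cadj (f \<alpha>) * f \<alpha> \<in> carrier_mat (nd v) (nd v)"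
      using mult_carrier_mat cadj_carrier_mat by blast
  qed
  finally have m2: "msum ?Out (\<lambda>\<alpha>. cadj (?f \<alpha>) * ?f \<alpha>) (nd v) = U v * msum ?Out (\<lambda>\<alpha>. cadj (f \<alpha>) * f \<alpha>) (nd v) * cadj (U v)" .
  show ?thesis unfolding moment_msum m1 m2
    by (rule conj_minus[symmetric, OF Uv msum_carrier msum_carrier])
qed

lemma rep_conj:
  assumes f: "f \<in> rep_space E s t nd" and U: "\<forall>w. unitary (nd w) (U w)"
  shows "(\<lambda>\<alpha>. U (t \<alpha>) * f \<alpha> * cadj (U (s \<alpha>))) \<in> rep_space E s t nd"
  unfolding rep_space_def
proof (intro CollectI ballI)
  fix \<alpha> assume a: "\<alpha> \<in> E"
  have fa: "f \<alpha> \<in> carrier_mat (nd (t \<alpha>)) (nd (s \<alpha>))" using f a unfolding rep_space_def by simp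
  have u1: "U (t \<alpha>) \<in> carrier_mat (nd (t \<alpha>)) (nd (t \<alpha>))" using unitaryD(1) U by blast
  have u2: "cadj (U (s \<alpha>)) \<in> carrier_mat (nd (s \<alpha>)) (nd (s \<alpha>))" using unitaryD(1) U cadj_carrier_mat by blast
  show "U (t \<alpha>) * f \<alpha> * cadj (U (s \<alpha>)) \<in> carrier_mat (nd (t \<alpha>)) (nd (s \<alpha>))"
    using mult_carrier_mat[OF mult_carrier_mat[OF u1 fa] u2] .
qed

lemma image_conj:
  assumes E: "finite E" and U: "\<forall>w. unitary (nd w) (U w)"
    and B: "in_moment_image V E s t nd B"
    and B': "\<forall>v\<in>V. B' v = U v * B v * cadj (U v)"
  shows "in_moment_image V E s t nd B'"
proof -
  obtain f where f: "f \<in> rep_space E s t nd" and mf: "\<forall>v\<in>V. moment E s t nd f v = B v"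
    using B unfolding in_moment_image_def by blast
  show ?thesis unfolding in_moment_image_def
    using rep_conj[OF f U] moment_conj[OF E f U] mf B' by (intro bexI[of _ "\<lambda>\<alpha>. U (t \<alpha>) * f \<alpha> * cadj (U (s \<alpha>))"]) simp_all
qed

lemma moment_index: "p < nd v \<Longrightarrow> q < nd v \<Longrightarrow> moment E s t nd f v $$ (p,q) =
      (\<Sum>\<alpha>\<in>{\<alpha>\<in>E. t \<alpha> = v}. (f \<alpha> * cadj (f \<alpha>)) $$ (p,q))
    - (\<Sum>\<alpha>\<in>{\<alpha>\<in>E. s \<alpha> = v}. (cadj (f \<alpha>) * f \<alpha>) $$ (p,q))"
  unfolding moment_def by simp

lemma moment_dim[simp]: "dim_row (moment E s t nd f v) = nd v" "dim_col (moment E s t nd f v) = nd v"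
  unfolding moment_def by simp_all

lemma zero_inner1: "F \<in> carrier_mat a 0 \<Longrightarrow> p < a \<Longrightarrow> q < a \<Longrightarrow> (F * cadj F) $$ (p,q) = 0"
  by (simp add: scalar_prod_def)

lemma zero_inner2: "F \<in> carrier_mat 0 b \<Longrightarrow> p < b \<Longrightarrow> q < b \<Longrightarrow> (cadj F * F) $$ (p,q) = 0"
  by (simp add: scalar_prod_def)

lemma sumQ:
  assumes E: "finite E" and f: "f \<in> rep_space E s t d" and p: "p < d i" and q: "q < d i"
  shows "moment E s t d f i $$ (p,q) =
      (\<Sum>\<alpha>\<in>{\<alpha>\<in>E. t \<alpha> = i \<and> 1 \<le> d (s \<alpha>)}. (f \<alpha> * cadj (f \<alpha>)) $$ (p,q))
    - (\<Sum>\<alpha>\<in>{\<alpha>\<in>E. s \<alpha> = i \<and> 1 \<le> d (t \<alpha>)}. (cadj (f \<alpha>) * f \<alpha>) $$ (p,q))"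
proof -
  have fa: "f \<alpha> \<in> carrier_mat (d (t \<alpha>)) (d (s \<alpha>))" if "\<alpha> \<in> E" for \<alpha>
    using f that unfolding rep_space_def by simp
  have s1: "(\<Sum>\<alpha>\<in>{\<alpha>\<in>E. t \<alpha> = i \<and> 1 \<le> d (s \<alpha>)}. (f \<alpha> * cadj (f \<alpha>)) $$ (p,q))
      = (\<Sum>\<alpha>\<in>{\<alpha>\<in>E. t \<alpha> = i}. (f \<alpha> * cadj (f \<alpha>)) $$ (p,q))"
  proof (rule sum.mono_neutral_left)
    show "\<forall>\<alpha>\<in>{\<alpha>\<in>E. t \<alpha> = i} - {\<alpha>\<in>E. t \<alpha> = i \<and> 1 \<le> d (s \<alpha>)}. (f \<alpha> * cadj (f \<alpha>)) $$ (p,q) = 0"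
    proof
      fix \<alpha> assume "\<alpha> \<in> {\<alpha>\<in>E. t \<alpha> = i} - {\<alpha>\<in>E. t \<alpha> = i \<and> 1 \<le> d (s \<alpha>)}"
      then have a: "\<alpha> \<in> E" "t \<alpha> = i" "d (s \<alpha>) = 0" by auto
      show "(f \<alpha> * cadj (f \<alpha>)) $$ (p,q) = 0"
        by (rule zero_inner1[of _ "d i"]) (use fa[OF a(1)] a p q in simp_all)
    qed
  qed (use E in auto)
  have s2: "(\<Sum>\<alpha>\<in>{\<alpha>\<in>E. s \<alpha> = i \<and> 1 \<le> d (t \<alpha>)}. (cadj (f \<alpha>) * f \<alpha>) $$ (p,q))
      = (\<Sum>\<alpha>\<in>{\<alpha>\<in>E. s \<alpha> = i}. (cadj (f \<alpha>) * f \<alpha>) $$ (p,q))"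
  proof (rule sum.mono_neutral_left)
    show "\<forall>\<alpha>\<in>{\<alpha>\<in>E. s \<alpha> = i} - {\<alpha>\<in>E. s \<alpha> = i \<and> 1 \<le> d (t \<alpha>)}. (cadj (f \<alpha>) * f \<alpha>) $$ (p,q) = 0"
    proof
      fix \<alpha> assume "\<alpha> \<in> {\<alpha>\<in>E. s \<alpha> = i} - {\<alpha>\<in>E. s \<alpha> = i \<and> 1 \<le> d (t \<alpha>)}"
      then have a: "\<alpha> \<in> E" "s \<alpha> = i" "d (t \<alpha>) = 0" by auto
      show "(cadj (f \<alpha>) * f \<alpha>) $$ (p,q) = 0"
        by (rule zero_inner2[of _ "d i"]) (use fa[OF a(1)] a p q in simp_all)
    qed
  qed (use E in auto)
  show ?thesis unfolding s1 s2 by (rule moment_index[where nd=d and v=i, OF p q])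
qed

lemma In_eq:
  assumes i: "i \<in> V" and k: "1 \<le> k" "k \<le> d i"
  shows "{x \<in> leg_arrows V E s t d. leg_tgt t d x = (i,k)}
    = Orig ` {\<alpha>\<in>E. t \<alpha> = i \<and> 1 \<le> d (s \<alpha>) \<and> d i = k} \<union> (if 2 \<le> k then {Leg i (k - 1)} else {})"
  using assms by (auto simp: leg_arrows_def)

lemma Out_eq:
  assumes i: "i \<in> V" and k: "1 \<le> k" "k \<le> d i"
  shows "{x \<in> leg_arrows V E s t d. leg_src s d x = (i,k)}
    = Orig ` {\<alpha>\<in>E. s \<alpha> = i \<and> 1 \<le> d (t \<alpha>) \<and> d i = k} \<union> (if k < d i then {Leg i k} else {})"
  using assms by (auto simp: leg_arrows_def)

lemma sum_split_leg:
  fixes h :: "('v,'e) leg_arrow \<Rightarrow> complex"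
  assumes E: "finite E"
  shows "(\<Sum>x\<in>Orig ` {\<alpha>\<in>E. P \<alpha> \<and> c} \<union> (if b then {Leg i j} else {}). h x)
    = (if c then (\<Sum>\<alpha>\<in>{\<alpha>\<in>E. P \<alpha>}. h (Orig \<alpha>)) else 0) + (if b then h (Leg i j) else 0)"
proof -
  have fin: "finite (Orig ` {\<alpha>\<in>E. P \<alpha> \<and> c})" using E by simp
  have dis: "Orig ` {\<alpha>\<in>E. P \<alpha> \<and> c} \<inter> (if b then {Leg i j} else {}) = {}" by auto
  have "(\<Sum>x\<in>Orig ` {\<alpha>\<in>E. P \<alpha> \<and> c} \<union> (if b then {Leg i j} else {}). h x)
     = (\<Sum>x\<in>Orig ` {\<alpha>\<in>E. P \<alpha> \<and> c}. h x) + (\<Sum>x\<in>(if b then {Leg i j} else {}). h x)"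
    by (rule sum.union_disjoint[OF fin _ dis]) simp
  also have "(\<Sum>x\<in>Orig ` {\<alpha>\<in>E. P \<alpha> \<and> c}. h x) = (\<Sum>\<alpha>\<in>{\<alpha>\<in>E. P \<alpha> \<and> c}. h (Orig \<alpha>))"
    by (rule sum.reindex_cong[of Orig]) (simp_all add: inj_on_def)
  also have "\<dots> = (if c then (\<Sum>\<alpha>\<in>{\<alpha>\<in>E. P \<alpha>}. h (Orig \<alpha>)) else 0)" by simp
  also have "(\<Sum>x\<in>(if b then {Leg i j} else {}). h x) = (if b then h (Leg i j) else 0)" by simp
  finally show ?thesis .
qed

lemma sumL:
  assumes E: "finite E" and i: "i \<in> V" and k: "1 \<le> k" "k \<le> d i" and p: "p < k" and q: "q < k"
  shows "moment (leg_arrows V E s t d) (leg_src s d) (leg_tgt t d) leg_dim g (i,k) $$ (p,q) =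
     ((if d i = k then (\<Sum>\<alpha>\<in>{\<alpha>\<in>E. t \<alpha> = i \<and> 1 \<le> d (s \<alpha>)}. (g (Orig \<alpha>) * cadj (g (Orig \<alpha>))) $$ (p,q)) else 0)
      + (if 2 \<le> k then (g (Leg i (k - 1)) * cadj (g (Leg i (k - 1)))) $$ (p,q) else 0))
   - ((if d i = k then (\<Sum>\<alpha>\<in>{\<alpha>\<in>E. s \<alpha> = i \<and> 1 \<le> d (t \<alpha>)}. (cadj (g (Orig \<alpha>)) * g (Orig \<alpha>)) $$ (p,q)) else 0)
      + (if k < d i then (cadj (g (Leg i k)) * g (Leg i k)) $$ (p,q) else 0))"
proof -
  have pk: "p < leg_dim (i,k)" "q < leg_dim (i,k)" using p q by (simp_all add: leg_dim_def)
  have e1: "{\<alpha>\<in>E. t \<alpha> = i \<and> 1 \<le> d (s \<alpha>) \<and> d i = k} = {\<alpha>\<in>E. (t \<alpha> = i \<and> 1 \<le> d (s \<alpha>)) \<and> d i = k}" by auto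
  have e2: "{\<alpha>\<in>E. s \<alpha> = i \<and> 1 \<le> d (t \<alpha>) \<and> d i = k} = {\<alpha>\<in>E. (s \<alpha> = i \<and> 1 \<le> d (t \<alpha>)) \<and> d i = k}" by auto
  show ?thesis
    unfolding moment_index[where nd=leg_dim, OF pk] In_eq[where d=d and E=E and s=s and t=t, OF i k] Out_eq[where d=d and E=E and s=s and t=t, OF i k] e1 e2
    unfolding sum_split_leg[OF E] ..
qed

definition beta :: "real list \<Rightarrow> nat \<Rightarrow> complex mat" where
  "beta a k = mat (Suc k) k (\<lambda>(p,q). if p = q then complex_of_real (sqrt (a ! k - a ! p)) else 0)"

lemma beta_carrier[simp]: "beta a k \<in> carrier_mat (Suc k) k"
  unfolding beta_def by simp

lemma beta_dim[simp]: "dim_row (beta a k) = Suc k" "dim_col (beta a k) = k"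
  unfolding beta_def by simp_all

lemma sqrt_cnj: "x \<ge> 0 \<Longrightarrow> complex_of_real (sqrt x) * cnj (complex_of_real (sqrt x)) = complex_of_real x"
  by (simp flip: of_real_mult)

lemma beta_BBs:
  assumes a: "sorted a" "k < length a" and p: "p < Suc k" and q: "q < Suc k"
  shows "(beta a k * cadj (beta a k)) $$ (p,q) = (if p = q \<and> p < k then complex_of_real (a ! k - a ! p) else 0)"
proof -
  let ?r = "\<lambda>l. complex_of_real (sqrt (a ! k - a ! l))"
  have "(beta a k * cadj (beta a k)) $$ (p,q) = (\<Sum>l\<in>{0..<k}. beta a k $$ (p,l) * cnj (beta a k $$ (q,l)))"
    using p q by (simp add: scalar_prod_def)
  also have "\<dots> = (\<Sum>l\<in>{0..<k}. if l = p then (if q = p then ?r p * cnj (?r p) else 0) else 0)"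
    by (rule sum.cong) (use p q in \<open>simp_all add: beta_def\<close>)
  also have "\<dots> = (if p < k then (if q = p then ?r p * cnj (?r p) else 0) else 0)"
    by (simp add: sum.delta)
  also have "\<dots> = (if p = q \<and> p < k then complex_of_real (a ! k - a ! p) else 0)"
  proof (cases "p < k")
    case True
    have "a ! p \<le> a ! k" using a True by (simp add: sorted_nth_mono)
    then show ?thesis using True sqrt_cnj[of "a ! k - a ! p"] by auto
  qed simp
  finally show ?thesis .
qed

lemma beta_BsB:
  assumes a: "sorted a" "k < length a" and p: "p < k" and q: "q < k"
  shows "(cadj (beta a k) * beta a k) $$ (p,q) = (if p = q then complex_of_real (a ! k - a ! p) else 0)"
proof -
  let ?r = "\<lambda>l. complex_of_real (sqrt (a ! k - a ! l))"
  have "(cadj (beta a k) * beta a k) $$ (p,q) = (\<Sum>l\<in>{0..<Suc k}. cnj (beta a k $$ (l,p)) * beta a k $$ (l,q))"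
    using p q by (simp add: scalar_prod_def)
  also have "\<dots> = (\<Sum>l\<in>{0..<Suc k}. if l = p then (if q = p then ?r p * cnj (?r p) else 0) else 0)"
    by (rule sum.cong) (use p q in \<open>simp_all add: beta_def mult.commute\<close>)
  also have "\<dots> = (if q = p then ?r p * cnj (?r p) else 0)"
    using p by (simp add: sum.delta)
  also have "\<dots> = (if p = q then complex_of_real (a ! k - a ! p) else 0)"
  proof -
    have "a ! p \<le> a ! k" using a p by (simp add: sorted_nth_mono)
    then show ?thesis using sqrt_cnj[of "a ! k - a ! p"] by auto
  qed
  finally show ?thesis .
qed

definition legrep :: "('e \<Rightarrow> complex mat) \<Rightarrow> ('v \<Rightarrow> real list) \<Rightarrow> ('v,'e) leg_arrow \<Rightarrow> complex mat" where
  "legrep f a x = (case x of Orig \<alpha> \<Rightarrow> f \<alpha> | Leg i k \<Rightarrow> beta (a i) k)"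

lemma legrep_simps[simp]: "legrep f a (Orig \<alpha>) = f \<alpha>" "legrep f a (Leg i k) = beta (a i) k"
  unfolding legrep_def by simp_all

lemma forward:
  assumes E: "finite E"
    and a: "\<forall>i\<in>V. sorted (a i) \<and> length (a i) = d i"
    and f: "f \<in> rep_space E s t d" and mf: "\<forall>i\<in>V. moment E s t d f i = rdiag (a i)"
  shows "in_moment_image (leg_vertices V d) (leg_arrows V E s t d) (leg_src s d) (leg_tgt t d) leg_dim
      (\<lambda>(i,k). complex_of_real (Theta (a i) (d i) k) \<cdot>\<^sub>m 1\<^sub>m k)"
proof -
  let ?g = "legrep f a"
  have fa: "f \<alpha> \<in> carrier_mat (d (t \<alpha>)) (d (s \<alpha>))" if "\<alpha> \<in> E" for \<alpha>
    using f that unfolding rep_space_def by simp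
  have g: "?g \<in> rep_space (leg_arrows V E s t d) (leg_src s d) (leg_tgt t d) leg_dim"
    unfolding rep_space_def
  proof (intro CollectI ballI)
    fix x assume x: "x \<in> leg_arrows V E s t d"
    show "?g x \<in> carrier_mat (leg_dim (leg_tgt t d x)) (leg_dim (leg_src s d x))"
    proof (cases x)
      case (Orig \<alpha>)
      then have "\<alpha> \<in> E" using x unfolding leg_arrows_def by auto
      then show ?thesis using fa Orig by (simp add: legrep_def leg_dim_def)
    next
      case (Leg i k)
      then show ?thesis by (simp add: legrep_def leg_dim_def)
    qed
  qed
  have main: "moment (leg_arrows V E s t d) (leg_src s d) (leg_tgt t d) leg_dim ?g (i,k)
      = complex_of_real (Theta (a i) (d i) k) \<cdot>\<^sub>m 1\<^sub>m k"
    if ik: "(i,k) \<in> leg_vertices V d" for i k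
  proof -
    have i: "i \<in> V" and k: "1 \<le> k" "k \<le> d i" using ik unfolding leg_vertices_def by simp_all
    have sa: "sorted (a i)" and la: "length (a i) = d i" using a i by simp_all
    show ?thesis
    proof (rule eq_matI)
      fix p q assume "p < dim_row (complex_of_real (Theta (a i) (d i) k) \<cdot>\<^sub>m 1\<^sub>m k)"
        "q < dim_col (complex_of_real (Theta (a i) (d i) k) \<cdot>\<^sub>m 1\<^sub>m k)"
      then have p: "p < k" and q: "q < k" by simp_all
      note L = sumL[where d=d and g="legrep f a" and s=s and t=t, OF E i k p q]
      have tgt: "(complex_of_real (Theta (a i) (d i) k) \<cdot>\<^sub>m 1\<^sub>m k) $$ (p,q) =
          (if p = q then complex_of_real (Theta (a i) (d i) k) else 0)" using p q by simp
      show "moment (leg_arrows V E s t d) (leg_src s d) (leg_tgt t d) leg_dim ?g (i,k) $$ (p,q)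
          = (complex_of_real (Theta (a i) (d i) k) \<cdot>\<^sub>m 1\<^sub>m k) $$ (p,q)"
      proof (cases "k < d i")
        case True
        have b2: "(if 2 \<le> k then (beta (a i) (k - 1) * cadj (beta (a i) (k - 1))) $$ (p,q) else 0)
          = (if 2 \<le> k \<and> p = q \<and> p < k - 1 then complex_of_real (a i ! (k - 1) - a i ! p) else 0)"
        proof (cases "2 \<le> k")
          case True2: True
          have "(beta (a i) (k - 1) * cadj (beta (a i) (k - 1))) $$ (p,q)
             = (if p = q \<and> p < k - 1 then complex_of_real (a i ! (k - 1) - a i ! p) else 0)"
            by (rule beta_BBs) (use sa la k p q in simp_all)
          then show ?thesis using True2 by simp
        qed simp
        have b3: "(cadj (beta (a i) k) * beta (a i) k) $$ (p,q) = (if p = q then complex_of_real (a i ! k - a i ! p) else 0)"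
          by (rule beta_BsB) (use sa la True p q in simp_all)
        have th: "Theta (a i) (d i) k = a i ! (k - 1) - a i ! k" using True unfolding Theta_def by simp
        have "moment (leg_arrows V E s t d) (leg_src s d) (leg_tgt t d) leg_dim ?g (i,k) $$ (p,q)
          = (if 2 \<le> k \<and> p = q \<and> p < k - 1 then complex_of_real (a i ! (k - 1) - a i ! p) else 0)
            - (if p = q then complex_of_real (a i ! k - a i ! p) else 0)"
          unfolding L legrep_simps b2 b3 using True by simp
        also have "\<dots> = (if p = q then complex_of_real (Theta (a i) (d i) k) else 0)"
        proof (cases "p = q")
          case True
          show ?thesis
          proof (cases "p < k - 1")
            case True2: True
            then have "2 \<le> k" by simp
            then show ?thesis using True True2 unfolding th by (simp flip: of_real_diff)
          next
            case False
            then have "p = k - 1" using p by simp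
            then show ?thesis using True False unfolding th by (simp flip: of_real_diff)
          qed
        qed simp
        finally show ?thesis unfolding tgt .
      next
        case False
        then have kd: "k = d i" using k by simp
        have b2: "(if 2 \<le> k then (beta (a i) (k - 1) * cadj (beta (a i) (k - 1))) $$ (p,q) else 0)
          = (if 2 \<le> k \<and> p = q \<and> p < k - 1 then complex_of_real (a i ! (k - 1) - a i ! p) else 0)"
        proof (cases "2 \<le> k")
          case True2: True
          have "(beta (a i) (k - 1) * cadj (beta (a i) (k - 1))) $$ (p,q)
             = (if p = q \<and> p < k - 1 then complex_of_real (a i ! (k - 1) - a i ! p) else 0)"
            by (rule beta_BBs) (use sa la k p q in simp_all)
          then show ?thesis using True2 by simp
        qed simp
        have pd: "p < d i" "q < d i" using p q kd by simp_all
        have mQ: "(\<Sum>\<alpha>\<in>{\<alpha>\<in>E. t \<alpha> = i \<and> 1 \<le> d (s \<alpha>)}. (f \<alpha> * cadj (f \<alpha>)) $$ (p,q))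
          - (\<Sum>\<alpha>\<in>{\<alpha>\<in>E. s \<alpha> = i \<and> 1 \<le> d (t \<alpha>)}. (cadj (f \<alpha>) * f \<alpha>) $$ (p,q))
          = (if p = q then complex_of_real (a i ! p) else 0)"
          using sumQ[OF E f pd, symmetric] mf i pd la by simp
        have th: "Theta (a i) (d i) k = a i ! (k - 1)" using kd unfolding Theta_def by simp
        have "moment (leg_arrows V E s t d) (leg_src s d) (leg_tgt t d) leg_dim ?g (i,k) $$ (p,q)
          = ((\<Sum>\<alpha>\<in>{\<alpha>\<in>E. t \<alpha> = i \<and> 1 \<le> d (s \<alpha>)}. (f \<alpha> * cadj (f \<alpha>)) $$ (p,q))
          - (\<Sum>\<alpha>\<in>{\<alpha>\<in>E. s \<alpha> = i \<and> 1 \<le> d (t \<alpha>)}. (cadj (f \<alpha>) * f \<alpha>) $$ (p,q)))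
          + (if 2 \<le> k then (beta (a i) (k - 1) * cadj (beta (a i) (k - 1))) $$ (p,q) else 0)"
          unfolding L legrep_simps using kd by simp
        also have "\<dots> = (if p = q then complex_of_real (Theta (a i) (d i) k) else 0)"
        proof -
          have pk1: "p = k - 1" if "\<not> (2 \<le> k \<and> p < k - 1)" using p that by auto
          show ?thesis unfolding mQ b2 th using p kd pk1 by (auto simp flip: of_real_add)
        qed
        finally show ?thesis unfolding tgt .
      qed
    qed (simp_all add: leg_dim_def)
  qed
  show ?thesis unfolding in_moment_image_def
  proof (rule bexI[OF _ g], intro ballI)
    fix v assume "v \<in> leg_vertices V d"
    then show "moment (leg_arrows V E s t d) (leg_src s d) (leg_tgt t d) leg_dim (legrep f a) v =
      (case v of (i, k) \<Rightarrow> complex_of_real (Theta (a i) (d i) k) \<cdot>\<^sub>m 1\<^sub>m k)"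
      using main by (cases v) simp
  qed
qed

lemma conj_scalar: assumes "unitary n W"
  shows "W * (c \<cdot>\<^sub>m 1\<^sub>m n) * cadj W = c \<cdot>\<^sub>m 1\<^sub>m n"
proof -
  note u = unitaryD[OF assms]
  have cW: "cadj W \<in> carrier_mat n n" using u by simp
  have "W * (c \<cdot>\<^sub>m 1\<^sub>m n) = c \<cdot>\<^sub>m (W * 1\<^sub>m n)" by (rule mult_smult_distrib[OF u(1) one_carrier_mat])
  also have "W * 1\<^sub>m n = W" using u(1) by simp
  finally have "W * (c \<cdot>\<^sub>m 1\<^sub>m n) * cadj W = c \<cdot>\<^sub>m W * cadj W" by simp
  also have "\<dots> = c \<cdot>\<^sub>m (W * cadj W)" by (rule mult_smult_assoc_mat[OF u(1) cW])
  finally show ?thesis using u(3) by simp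
qed

lemma char_poly_conj: assumes "unitary n W" "R \<in> carrier_mat n n"
  shows "char_poly (W * R * cadj W) = char_poly R"
proof -
  note u = unitaryD[OF assms(1)]
  have cW: "cadj W \<in> carrier_mat n n" using u by simp
  have WR: "W * R * cadj W \<in> carrier_mat n n" using mult_carrier_mat[OF mult_carrier_mat[OF u(1) assms(2)] cW] .
  have dWR: "dim_row (W * R * cadj W) = n" using WR u(1) by simp
  have "similar_mat_wit (W * R * cadj W) R W (cadj W)"
    unfolding similar_mat_wit_def Let_def dWR
  proof (intro conjI)
    show "{W * R * cadj W, R, W, cadj W} \<subseteq> carrier_mat n n" using WR assms(2) u(1) cW by blast
  qed (use u in simp_all)
  then have "similar_mat (W * R * cadj W) R" unfolding similar_mat_def by blast
  then show ?thesis by (rule char_poly_similar)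
qed

lemma rdiag_minus_scalar: assumes "length es = n"
  shows "rdiag es - complex_of_real c \<cdot>\<^sub>m 1\<^sub>m n = rdiag (map (\<lambda>x. x - c) es)"
  by (rule eq_matI) (use assms in \<open>simp_all flip: of_real_diff\<close>)

lemma scalar_minus_rdiag: assumes "length es = n"
  shows "complex_of_real c \<cdot>\<^sub>m 1\<^sub>m n - rdiag es = rdiag (map (\<lambda>x. c - x) es)"
  by (rule eq_matI) (use assms in \<open>simp_all flip: of_real_diff\<close>)

lemma conj_sub_scalar: assumes W: "unitary n W" and R: "R \<in> carrier_mat n n"
  shows "W * R * cadj W - c \<cdot>\<^sub>m 1\<^sub>m n = W * (R - c \<cdot>\<^sub>m 1\<^sub>m n) * cadj W"
  using conj_minus[OF unitaryD(1)[OF W] R smult_carrier_mat[OF one_carrier_mat], of c] conj_scalar[OF W, of c]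
  by simp

lemma scalar_sub_conj: assumes W: "unitary n W" and R: "R \<in> carrier_mat n n"
  shows "c \<cdot>\<^sub>m 1\<^sub>m n - W * R * cadj W = W * (c \<cdot>\<^sub>m 1\<^sub>m n - R) * cadj W"
  using conj_minus[OF unitaryD(1)[OF W] smult_carrier_mat[OF one_carrier_mat] R, of c] conj_scalar[OF W, of c]
  by simp

lemma sylv_step:
  assumes b: "\<beta> \<in> carrier_mat (Suc k) k" and W': "unitary k W'" and les: "length es = k"
    and X: "cadj \<beta> * \<beta> = W' * rdiag es * cadj W'"
  shows "\<exists>W. unitary (Suc k) W \<and> \<beta> * cadj \<beta> = W * rdiag (es @ [0]) * cadj W"
proof -
  have cb: "cadj \<beta> \<in> carrier_mat k (Suc k)" using b by simp
  have R: "rdiag es \<in> carrier_mat k k" using rdiag_carrier'[OF les] .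
  have "char_poly (\<beta> * cadj \<beta>) = [:0,1:] * char_poly (cadj \<beta> * \<beta>)"
    by (rule char_poly_AB[OF b cb])
  also have "char_poly (cadj \<beta> * \<beta>) = char_poly (rdiag es)" unfolding X by (rule char_poly_conj[OF W' R])
  also have "[:0,1:] * char_poly (rdiag es) = (\<Prod>x\<leftarrow>es @ [0]. [:- complex_of_real x, 1:])"
    unfolding char_poly_rdiag by (simp add: mult.commute)
  finally have cp: "char_poly (\<beta> * cadj \<beta>) = (\<Prod>x\<leftarrow>es @ [0]. [:- complex_of_real x, 1:])" .
  have bb: "\<beta> * cadj \<beta> \<in> carrier_mat (Suc k) (Suc k)" using mult_carrier_mat[OF b cb] .
  have h: "cadj (\<beta> * cadj \<beta>) = \<beta> * cadj \<beta>" unfolding cadj_mult[OF b cb] by simp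
  show ?thesis using spectral[OF bb h cp] .
qed

lemma chain:
  fixes \<beta> :: "nat \<Rightarrow> complex mat" and a :: "real list"
  assumes hb: "\<And>k. 1 \<le> k \<Longrightarrow> k < d \<Longrightarrow> \<beta> k \<in> carrier_mat (Suc k) k"
    and hmid: "\<And>k p q. 1 \<le> k \<Longrightarrow> k < d \<Longrightarrow> p < k \<Longrightarrow> q < k \<Longrightarrow>
      (if 2 \<le> k then (\<beta> (k - 1) * cadj (\<beta> (k - 1))) $$ (p,q) else 0) - (cadj (\<beta> k) * \<beta> k) $$ (p,q)
       = (if p = q then complex_of_real (a ! (k - 1) - a ! k) else 0)"
  shows "1 \<le> k \<Longrightarrow> k < d \<Longrightarrow> \<exists>W. unitary (Suc k) W \<and>
     \<beta> k * cadj (\<beta> k) = W * rdiag (map (\<lambda>j. a ! k - a ! j) [0..<Suc k]) * cadj W"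
proof (induct k rule: nat_induct_at_least)
  case base
  have b1: "\<beta> 1 \<in> carrier_mat (Suc 1) 1" using hb[of 1] base by simp
  have X: "cadj (\<beta> 1) * \<beta> 1 = 1\<^sub>m 1 * rdiag [a ! 1 - a ! 0] * cadj (1\<^sub>m 1)"
  proof (rule eq_matI)
    fix p q assume "p < dim_row (1\<^sub>m 1 * rdiag [a ! 1 - a ! 0] * cadj (1\<^sub>m 1))"
      "q < dim_col (1\<^sub>m 1 * rdiag [a ! 1 - a ! 0] * cadj (1\<^sub>m 1))"
    then have p: "p = 0" and q: "q = 0" by simp_all
    have "0 - (cadj (\<beta> 1) * \<beta> 1) $$ (0,0) = complex_of_real (a ! 0 - a ! 1)"
      using hmid[of 1 0 0] base by simp
    then have "(cadj (\<beta> 1) * \<beta> 1) $$ (0,0) = complex_of_real (a ! 1 - a ! 0)"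
      by (metis diff_0 minus_diff_eq minus_minus of_real_diff)
    then show "(cadj (\<beta> 1) * \<beta> 1) $$ (p,q) = (1\<^sub>m 1 * rdiag [a ! 1 - a ! 0] * cadj (1\<^sub>m 1)) $$ (p,q)"
      using p q by simp
  qed (use b1 in simp_all)
  have "\<exists>W. unitary (Suc 1) W \<and> \<beta> 1 * cadj (\<beta> 1) = W * rdiag ([a ! 1 - a ! 0] @ [0]) * cadj W"
    by (rule sylv_step[OF _ unitary_one _ X]) (use b1 in simp_all)
  moreover have "map (\<lambda>j. a ! 1 - a ! j) [0..<Suc 1] = [a ! 1 - a ! 0] @ [0]" by simp
  ultimately show ?case by simp
next
  case (Suc k)
  obtain W where W: "unitary (Suc k) W"
    and Y: "\<beta> k * cadj (\<beta> k) = W * rdiag (map (\<lambda>j. a ! k - a ! j) [0..<Suc k]) * cadj W"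
  proof -
    have kd: "k < d" using Suc by simp
    show ?thesis using Suc.hyps(2)[OF kd] that by blast
  qed
  let ?es = "map (\<lambda>j. a ! k - a ! j) [0..<Suc k]"
  let ?c = "a ! k - a ! Suc k"
  have bk: "\<beta> k \<in> carrier_mat (Suc k) k" using hb[of k] Suc by simp
  have bk1: "\<beta> (Suc k) \<in> carrier_mat (Suc (Suc k)) (Suc k)" using hb[of "Suc k"] Suc by simp
  have R: "rdiag ?es \<in> carrier_mat (Suc k) (Suc k)" by (rule rdiag_carrier') simp
  have "cadj (\<beta> (Suc k)) * \<beta> (Suc k) = \<beta> k * cadj (\<beta> k) - complex_of_real ?c \<cdot>\<^sub>m 1\<^sub>m (Suc k)"
  proof (rule eq_matI)
    fix p q assume "p < dim_row (\<beta> k * cadj (\<beta> k) - complex_of_real ?c \<cdot>\<^sub>m 1\<^sub>m (Suc k))"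
      "q < dim_col (\<beta> k * cadj (\<beta> k) - complex_of_real ?c \<cdot>\<^sub>m 1\<^sub>m (Suc k))"
    then have p: "p < Suc k" and q: "q < Suc k" by simp_all
    have "(\<beta> k * cadj (\<beta> k)) $$ (p,q) - (cadj (\<beta> (Suc k)) * \<beta> (Suc k)) $$ (p,q)
       = (if p = q then complex_of_real ?c else 0)"
      using hmid[of "Suc k" p q] Suc p q by simp
    then show "(cadj (\<beta> (Suc k)) * \<beta> (Suc k)) $$ (p,q) = (\<beta> k * cadj (\<beta> k) - complex_of_real ?c \<cdot>\<^sub>m 1\<^sub>m (Suc k)) $$ (p,q)"
      using p q bk by (auto simp: algebra_simps)
  qed (use bk bk1 in simp_all)
  also have "\<dots> = W * (rdiag ?es - complex_of_real ?c \<cdot>\<^sub>m 1\<^sub>m (Suc k)) * cadj W"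
    unfolding Y by (rule conj_sub_scalar[OF W R])
  also have "rdiag ?es - complex_of_real ?c \<cdot>\<^sub>m 1\<^sub>m (Suc k) = rdiag (map (\<lambda>x. x - ?c) ?es)"
    by (rule rdiag_minus_scalar) simp
  also have "map (\<lambda>x. x - ?c) ?es = map (\<lambda>j. a ! Suc k - a ! j) [0..<Suc k]" by simp
  finally have X: "cadj (\<beta> (Suc k)) * \<beta> (Suc k) = W * rdiag (map (\<lambda>j. a ! Suc k - a ! j) [0..<Suc k]) * cadj W" .
  have "\<exists>W. unitary (Suc (Suc k)) W \<and> \<beta> (Suc k) * cadj (\<beta> (Suc k)) =
      W * rdiag (map (\<lambda>j. a ! Suc k - a ! j) [0..<Suc k] @ [0]) * cadj W"
    by (rule sylv_step[OF bk1 W _ X]) simp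
  moreover have "map (\<lambda>j. a ! Suc k - a ! j) [0..<Suc (Suc k)] = map (\<lambda>j. a ! Suc k - a ! j) [0..<Suc k] @ [0]" by simp
  ultimately show ?case by simp
qed

lemma unconj: assumes W: "unitary n W" and D: "D \<in> carrier_mat n n"
  shows "cadj W * (W * D * cadj W) * cadj (cadj W) = D"
proof -
  note u = unitaryD[OF W]
  have cW: "cadj W \<in> carrier_mat n n" using u by simp
  have WD: "W * D \<in> carrier_mat n n" using mult_carrier_mat[OF u(1) D] .
  have "cadj W * (W * D * cadj W) * cadj (cadj W) = cadj W * (W * D * cadj W) * W" by simp
  also have "\<dots> = cadj W * (W * D * cadj W * W)"
    by (rule assoc_mult_mat[OF cW mult_carrier_mat[OF WD cW] u(1)])
  also have "W * D * cadj W * W = W * D * (cadj W * W)" by (rule assoc_mult_mat[OF WD cW u(1)])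
  also have "\<dots> = W * D" using u(2) right_mult_one_mat[OF WD] by simp
  also have "cadj W * (W * D) = D" by (rule unitary_cancel(2)[OF W D])
  finally show ?thesis .
qed

lemma alg_rearr: "(x + y) - z = r \<Longrightarrow> x - z = r - (y::complex)"
  by (simp add: algebra_simps)

lemma vertex_decomp:
  assumes E: "finite E" and i: "i \<in> V" and la: "length a = d i"
    and g: "g \<in> rep_space (leg_arrows V E s t d) (leg_src s d) (leg_tgt t d) leg_dim"
    and mg: "\<forall>v\<in>leg_vertices V d. moment (leg_arrows V E s t d) (leg_src s d) (leg_tgt t d) leg_dim g v
        = (case v of (i, k) \<Rightarrow> complex_of_real (Theta (A i) (d i) k) \<cdot>\<^sub>m 1\<^sub>m k)"
    and Ai: "A i = a"
    and f: "f \<in> rep_space E s t d"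
    and fg: "\<And>\<alpha>. \<alpha> \<in> E \<Longrightarrow> 1 \<le> d (s \<alpha>) \<Longrightarrow> 1 \<le> d (t \<alpha>) \<Longrightarrow> f \<alpha> = g (Orig \<alpha>)"
  shows "\<exists>W. unitary (d i) W \<and> moment E s t d f i = W * rdiag a * cadj W"
proof -
  let ?n = "d i"
  let ?L = "leg_arrows V E s t d"
  define \<beta> where "\<beta> k = g (Leg i k)" for k
  have gx: "g x \<in> carrier_mat (leg_dim (leg_tgt t d x)) (leg_dim (leg_src s d x))" if "x \<in> ?L" for x
    using g that unfolding rep_space_def by simp
  have hb: "\<beta> k \<in> carrier_mat (Suc k) k" if "1 \<le> k" "k < ?n" for k
  proof -
    have "Leg i k \<in> ?L" using i that unfolding leg_arrows_def by simp
    then show ?thesis using gx[of "Leg i k"] unfolding \<beta>_def by (simp add: leg_dim_def)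
  qed
  have mk: "moment ?L (leg_src s d) (leg_tgt t d) leg_dim g (i,k) = complex_of_real (Theta a ?n k) \<cdot>\<^sub>m 1\<^sub>m k"
    if "1 \<le> k" "k \<le> ?n" for k
  proof -
    have "(i,k) \<in> leg_vertices V d" using i that unfolding leg_vertices_def by simp
    then show ?thesis using mg Ai by simp
  qed
  have hmid: "(if 2 \<le> k then (\<beta> (k - 1) * cadj (\<beta> (k - 1))) $$ (p,q) else 0) - (cadj (\<beta> k) * \<beta> k) $$ (p,q)
       = (if p = q then complex_of_real (a ! (k - 1) - a ! k) else 0)"
    if k: "1 \<le> k" "k < ?n" and p: "p < k" and q: "q < k" for k p q
  proof -
    have k': "1 \<le> k" "k \<le> ?n" using k by simp_all
    have "moment ?L (leg_src s d) (leg_tgt t d) leg_dim g (i,k) $$ (p,q) = (if p = q then complex_of_real (Theta a ?n k) else 0)"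
      using mk[OF k'] p q by simp
    moreover have "Theta a ?n k = a ! (k - 1) - a ! k" using k unfolding Theta_def by simp
    ultimately show ?thesis unfolding sumL[where d=d and g=g and s=s and t=t, OF E i k' p q] \<beta>_def using k by simp
  qed
  have top: "moment E s t d f i $$ (p,q) = (if p = q then complex_of_real (a ! (?n - 1)) else 0)
      - (if 2 \<le> ?n then (\<beta> (?n - 1) * cadj (\<beta> (?n - 1))) $$ (p,q) else 0)"
    if p: "p < ?n" and q: "q < ?n" for p q
  proof -
    have n1: "1 \<le> ?n" "?n \<le> ?n" using p by simp_all
    have s1: "(\<Sum>\<alpha>\<in>{\<alpha>\<in>E. t \<alpha> = i \<and> 1 \<le> d (s \<alpha>)}. (f \<alpha> * cadj (f \<alpha>)) $$ (p,q))
        = (\<Sum>\<alpha>\<in>{\<alpha>\<in>E. t \<alpha> = i \<and> 1 \<le> d (s \<alpha>)}. (g (Orig \<alpha>) * cadj (g (Orig \<alpha>))) $$ (p,q))"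
    proof (rule sum.cong)
      fix \<alpha> assume "\<alpha> \<in> {\<alpha>\<in>E. t \<alpha> = i \<and> 1 \<le> d (s \<alpha>)}"
      then have "\<alpha> \<in> E" "1 \<le> d (s \<alpha>)" "1 \<le> d (t \<alpha>)" using n1 by simp_all
      then have "f \<alpha> = g (Orig \<alpha>)" by (rule fg)
      then show "(f \<alpha> * cadj (f \<alpha>)) $$ (p,q) = (g (Orig \<alpha>) * cadj (g (Orig \<alpha>))) $$ (p,q)" by simp
    qed simp
    have s2: "(\<Sum>\<alpha>\<in>{\<alpha>\<in>E. s \<alpha> = i \<and> 1 \<le> d (t \<alpha>)}. (cadj (f \<alpha>) * f \<alpha>) $$ (p,q))
        = (\<Sum>\<alpha>\<in>{\<alpha>\<in>E. s \<alpha> = i \<and> 1 \<le> d (t \<alpha>)}. (cadj (g (Orig \<alpha>)) * g (Orig \<alpha>)) $$ (p,q))"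
    proof (rule sum.cong)
      fix \<alpha> assume "\<alpha> \<in> {\<alpha>\<in>E. s \<alpha> = i \<and> 1 \<le> d (t \<alpha>)}"
      then have "\<alpha> \<in> E" "1 \<le> d (s \<alpha>)" "1 \<le> d (t \<alpha>)" using n1 by simp_all
      then have "f \<alpha> = g (Orig \<alpha>)" by (rule fg)
      then show "(cadj (f \<alpha>) * f \<alpha>) $$ (p,q) = (cadj (g (Orig \<alpha>)) * g (Orig \<alpha>)) $$ (p,q)" by simp
    qed simp
    have "moment ?L (leg_src s d) (leg_tgt t d) leg_dim g (i,?n) $$ (p,q) = (if p = q then complex_of_real (Theta a ?n ?n) else 0)"
      using mk[OF n1] p q by simp
    moreover have "Theta a ?n ?n = a ! (?n - 1)" unfolding Theta_def by simp
    ultimately have HH: "moment ?L (leg_src s d) (leg_tgt t d) leg_dim g (i,?n) $$ (p,q) = (if p = q then complex_of_real (a ! (?n - 1)) else 0)"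
      by simp
    have "((\<Sum>\<alpha>\<in>{\<alpha>\<in>E. t \<alpha> = i \<and> 1 \<le> d (s \<alpha>)}. (g (Orig \<alpha>) * cadj (g (Orig \<alpha>))) $$ (p,q))
        + (if 2 \<le> ?n then (\<beta> (?n - 1) * cadj (\<beta> (?n - 1))) $$ (p,q) else 0))
      - (\<Sum>\<alpha>\<in>{\<alpha>\<in>E. s \<alpha> = i \<and> 1 \<le> d (t \<alpha>)}. (cadj (g (Orig \<alpha>)) * g (Orig \<alpha>)) $$ (p,q))
      = (if p = q then complex_of_real (a ! (?n - 1)) else 0)"
      using HH unfolding sumL[where d=d and g=g and s=s and t=t, OF E i n1 p q] \<beta>_def
      by (simp only: simp_thms if_True less_irrefl if_False add_0_right)
    then show ?thesis unfolding sumQ[OF E f p q] s1 s2 by (rule alg_rearr)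
  qed
  have Rc: "rdiag a \<in> carrier_mat ?n ?n" using rdiag_carrier'[OF la] .
  consider (z) "?n = 0" | (o) "?n = 1" | (m) "2 \<le> ?n" by linarith
  then show ?thesis
  proof cases
    case z
    have "moment E s t d f i = 1\<^sub>m ?n * rdiag a * cadj (1\<^sub>m ?n)"
      by (rule eq_matI) (use z la in simp_all)
    then show ?thesis using unitary_one by blast
  next
    case o
    have "moment E s t d f i = 1\<^sub>m ?n * rdiag a * cadj (1\<^sub>m ?n)"
    proof (rule eq_matI)
      fix p q assume "p < dim_row (1\<^sub>m ?n * rdiag a * cadj (1\<^sub>m ?n))" "q < dim_col (1\<^sub>m ?n * rdiag a * cadj (1\<^sub>m ?n))"
      then have p: "p = 0" and q: "q = 0" using o la by simp_all
      show "moment E s t d f i $$ (p,q) = (1\<^sub>m ?n * rdiag a * cadj (1\<^sub>m ?n)) $$ (p,q)"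
        using top[of p q] p q o la by simp
    qed (use o la in simp_all)
    then show ?thesis using unitary_one by blast
  next
    case m
    have k: "1 \<le> ?n - 1" "?n - 1 < ?n" using m by simp_all
    obtain W where W: "unitary (Suc (?n - 1)) W"
      and Y: "\<beta> (?n - 1) * cadj (\<beta> (?n - 1)) = W * rdiag (map (\<lambda>j. a ! (?n - 1) - a ! j) [0..<Suc (?n - 1)]) * cadj W"
      using chain[of ?n \<beta> a, OF hb hmid k] by blast
    have sn: "Suc (?n - 1) = ?n" using m by simp
    have W': "unitary ?n W" using W sn by simp
    let ?es = "map (\<lambda>j. a ! (?n - 1) - a ! j) [0..<?n]"
    have Y': "\<beta> (?n - 1) * cadj (\<beta> (?n - 1)) = W * rdiag ?es * cadj W" using Y sn by simp
    have bc: "\<beta> (?n - 1) * cadj (\<beta> (?n - 1)) \<in> carrier_mat ?n ?n"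
      using mult_carrier_mat[OF hb[OF k] cadj_carrier_mat[OF hb[OF k]]] sn by simp
    have R: "rdiag ?es \<in> carrier_mat ?n ?n" by (rule rdiag_carrier') simp
    have "moment E s t d f i = complex_of_real (a ! (?n - 1)) \<cdot>\<^sub>m 1\<^sub>m ?n - \<beta> (?n - 1) * cadj (\<beta> (?n - 1))"
    proof (rule eq_matI)
      fix p q assume "p < dim_row (complex_of_real (a ! (?n - 1)) \<cdot>\<^sub>m 1\<^sub>m ?n - \<beta> (?n - 1) * cadj (\<beta> (?n - 1)))"
        "q < dim_col (complex_of_real (a ! (?n - 1)) \<cdot>\<^sub>m 1\<^sub>m ?n - \<beta> (?n - 1) * cadj (\<beta> (?n - 1)))"
      then have p: "p < ?n" and q: "q < ?n" using hb[OF k] sn by simp_all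
      show "moment E s t d f i $$ (p,q) = (complex_of_real (a ! (?n - 1)) \<cdot>\<^sub>m 1\<^sub>m ?n - \<beta> (?n - 1) * cadj (\<beta> (?n - 1))) $$ (p,q)"
        using top[OF p q] m p q hb[OF k] sn by simp
    qed (use hb[OF k] sn in simp_all)
    also have "\<dots> = W * (complex_of_real (a ! (?n - 1)) \<cdot>\<^sub>m 1\<^sub>m ?n - rdiag ?es) * cadj W"
      unfolding Y' by (rule scalar_sub_conj[OF W' R])
    also have "complex_of_real (a ! (?n - 1)) \<cdot>\<^sub>m 1\<^sub>m ?n - rdiag ?es = rdiag (map (\<lambda>x. a ! (?n - 1) - x) ?es)"
      by (rule scalar_minus_rdiag) simp
    also have "map (\<lambda>x. a ! (?n - 1) - x) ?es = a"
    proof -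
      have "map (\<lambda>x. a ! (?n - 1) - x) ?es = map (\<lambda>j. a ! j) [0..<length a]" using la by simp
      then show ?thesis by (simp add: map_nth)
    qed
    finally show ?thesis using W' by blast
  qed
qed

lemma backward:
  assumes E: "finite E" and la: "\<forall>i\<in>V. length (a i) = d i"
    and L: "in_moment_image (leg_vertices V d) (leg_arrows V E s t d) (leg_src s d) (leg_tgt t d) leg_dim
      (\<lambda>(i,k). complex_of_real (Theta (a i) (d i) k) \<cdot>\<^sub>m 1\<^sub>m k)"
  shows "in_moment_image V E s t d (\<lambda>i. rdiag (a i))"
proof -
  obtain g where g: "g \<in> rep_space (leg_arrows V E s t d) (leg_src s d) (leg_tgt t d) leg_dim"
    and mg: "\<forall>v\<in>leg_vertices V d. moment (leg_arrows V E s t d) (leg_src s d) (leg_tgt t d) leg_dim g v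
        = (case v of (i, k) \<Rightarrow> complex_of_real (Theta (a i) (d i) k) \<cdot>\<^sub>m 1\<^sub>m k)"
    using L unfolding in_moment_image_def by blast
  define f where "f \<alpha> = (if 1 \<le> d (s \<alpha>) \<and> 1 \<le> d (t \<alpha>) then g (Orig \<alpha>) else 0\<^sub>m (d (t \<alpha>)) (d (s \<alpha>)))" for \<alpha>
  have f: "f \<in> rep_space E s t d"
    unfolding rep_space_def
  proof (intro CollectI ballI)
    fix \<alpha> assume a: "\<alpha> \<in> E"
    show "f \<alpha> \<in> carrier_mat (d (t \<alpha>)) (d (s \<alpha>))"
    proof (cases "1 \<le> d (s \<alpha>) \<and> 1 \<le> d (t \<alpha>)")
      case True
      then have "Orig \<alpha> \<in> leg_arrows V E s t d" using a unfolding leg_arrows_def by simp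
      then have "g (Orig \<alpha>) \<in> carrier_mat (leg_dim (leg_tgt t d (Orig \<alpha>))) (leg_dim (leg_src s d (Orig \<alpha>)))"
        using g unfolding rep_space_def by blast
      then show ?thesis using True unfolding f_def by (simp add: leg_dim_def)
    next
      case False
      then have "f \<alpha> = 0\<^sub>m (d (t \<alpha>)) (d (s \<alpha>))" unfolding f_def by (simp only: if_False)
      then show ?thesis by simp
    qed
  qed
  have fg: "\<And>\<alpha>. \<alpha> \<in> E \<Longrightarrow> 1 \<le> d (s \<alpha>) \<Longrightarrow> 1 \<le> d (t \<alpha>) \<Longrightarrow> f \<alpha> = g (Orig \<alpha>)"
    unfolding f_def by simp
  have dec: "\<exists>W. unitary (d i) W \<and> moment E s t d f i = W * rdiag (a i) * cadj W" if i: "i \<in> V" for i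
    by (rule vertex_decomp[OF E i _ g mg refl f fg]) (use la i in simp)
  define Wf where "Wf w = (if w \<in> V then (SOME W. unitary (d w) W \<and> moment E s t d f w = W * rdiag (a w) * cadj W)
     else 1\<^sub>m (d w))" for w
  have Wf1: "unitary (d w) (Wf w) \<and> (w \<in> V \<longrightarrow> moment E s t d f w = Wf w * rdiag (a w) * cadj (Wf w))" for w
  proof (cases "w \<in> V")
    case True
    then show ?thesis unfolding Wf_def using someI_ex[OF dec[OF True]] by simp
  next
    case False
    then show ?thesis unfolding Wf_def using unitary_one by simp
  qed
  have U: "\<forall>w. unitary (d w) (cadj (Wf w))" using Wf1 unitary_cadj by blast
  have B: "in_moment_image V E s t d (\<lambda>w. moment E s t d f w)"
    unfolding in_moment_image_def using f by blast
  show ?thesis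
  proof (rule image_conj[OF E U B], intro ballI)
    fix v assume v: "v \<in> V"
    have R: "rdiag (a v) \<in> carrier_mat (d v) (d v)" using la v rdiag_carrier' by blast
    have W: "unitary (d v) (Wf v)" and M: "moment E s t d f v = Wf v * rdiag (a v) * cadj (Wf v)" using Wf1[of v] v by simp_all
    show "rdiag (a v) = cadj (Wf v) * moment E s t d f v * cadj (cadj (Wf v))"
      unfolding M using unconj[OF W R] by simp
  qed
qed

theorem proposition4p2:
  fixes V :: "'v set" and E :: "'e set" and s t :: "'e \<Rightarrow> 'v"
    and d :: "'v \<Rightarrow> nat" and B :: "'v \<Rightarrow> complex mat" and a :: "'v \<Rightarrow> real list"
  assumes "finite V" and "finite E"
    and "\<forall>\<alpha>\<in>E. s \<alpha> \<in> V \<and> t \<alpha> \<in> V"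
    and "\<forall>i\<in>V. herm (d i) (B i)"
    and "\<forall>i\<in>V. sorted_eigenvalues (B i) (a i)"
  shows "in_moment_image V E s t d B \<longleftrightarrow>
    in_moment_image (leg_vertices V d) (leg_arrows V E s t d) (leg_src s d) (leg_tgt t d) leg_dim
      (\<lambda>(i,k). complex_of_real (Theta (a i) (d i) k) \<cdot>\<^sub>m 1\<^sub>m k)"
proof -
  note E = assms(2)
  have Bc: "B i \<in> carrier_mat (d i) (d i)" and hB: "cadj (B i) = B i" if "i \<in> V" for i
    using assms(4) that unfolding herm_def by simp_all
  have sa: "sorted (a i)" and la: "length (a i) = d i"
    and cp: "char_poly (B i) = (\<Prod>x\<leftarrow>a i. [:- complex_of_real x, 1:])" if "i \<in> V" for i
    using assms(5) that Bc[OF that] unfolding sorted_eigenvalues_def by simp_all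
  have dec: "\<exists>U. unitary (d i) U \<and> B i = U * rdiag (a i) * cadj U" if i: "i \<in> V" for i
    using spectral[OF Bc[OF i] hB[OF i] cp[OF i]] .
  define Uf where "Uf w = (if w \<in> V then (SOME U. unitary (d w) U \<and> B w = U * rdiag (a w) * cadj U)
     else 1\<^sub>m (d w))" for w
  have Uf1: "unitary (d w) (Uf w) \<and> (w \<in> V \<longrightarrow> B w = Uf w * rdiag (a w) * cadj (Uf w))" for w
  proof (cases "w \<in> V")
    case True
    then show ?thesis unfolding Uf_def using someI_ex[OF dec[OF True]] by simp
  next
    case False
    then show ?thesis unfolding Uf_def using unitary_one by simp
  qed
  have U: "\<forall>w. unitary (d w) (Uf w)" using Uf1 by blast
  have cU: "\<forall>w. unitary (d w) (cadj (Uf w))" using Uf1 unitary_cadj by blast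
  have la': "\<forall>i\<in>V. length (a i) = d i" using la by blast
  have saa: "\<forall>i\<in>V. sorted (a i) \<and> length (a i) = d i" using la sa by blast
  show ?thesis
  proof
    assume "in_moment_image V E s t d B"
    then have "in_moment_image V E s t d (\<lambda>i. rdiag (a i))"
    proof (rule image_conj[OF E cU], intro ballI)
      fix v assume v: "v \<in> V"
      have R: "rdiag (a v) \<in> carrier_mat (d v) (d v)" using la[OF v] rdiag_carrier' by blast
      have W: "unitary (d v) (Uf v)" and M: "B v = Uf v * rdiag (a v) * cadj (Uf v)" using Uf1[of v] v by simp_all
      show "rdiag (a v) = cadj (Uf v) * B v * cadj (cadj (Uf v))"
        unfolding M using unconj[OF W R] by simp
    qed
    then obtain f where f: "f \<in> rep_space E s t d" and mf: "\<forall>i\<in>V. moment E s t d f i = rdiag (a i)"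
      unfolding in_moment_image_def by blast
    show "in_moment_image (leg_vertices V d) (leg_arrows V E s t d) (leg_src s d) (leg_tgt t d) leg_dim
      (\<lambda>(i,k). complex_of_real (Theta (a i) (d i) k) \<cdot>\<^sub>m 1\<^sub>m k)"
      by (rule forward[OF E saa f mf])
  next
    assume "in_moment_image (leg_vertices V d) (leg_arrows V E s t d) (leg_src s d) (leg_tgt t d) leg_dim
      (\<lambda>(i,k). complex_of_real (Theta (a i) (d i) k) \<cdot>\<^sub>m 1\<^sub>m k)"
    then have "in_moment_image V E s t d (\<lambda>i. rdiag (a i))" by (rule backward[OF E la'])
    then show "in_moment_image V E s t d B"
    proof (rule image_conj[OF E U], intro ballI)
      fix v assume v: "v \<in> V"
      show "B v = Uf v * rdiag (a v) * cadj (Uf v)" using Uf1[of v] v by simp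
    qed
  qed
qed

end
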